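(* Let $k,l\in\mathbb{Z}$ with $k\ne l$, and let $i_1,\dots,i_m,j_1,\dots,j_n\in\{1,\dots,r\}$ (with $m,n\ge0$). Then every $R$-bimodule homomorphism (of any degree) $$B_\rho^{\otimes k}\otimes_R B_{i_1}\otimes_R\cdots\otimes_R B_{i_m}\longrightarrow B_\rho^{\otimes l}\otimes_R B_{j_1}\otimes_R\cdots\otimes_R B_{j_n}$$ is zero.
   Context: Fix $r\ge 3$. Let $R=\mathbb{Q}[y,x_1,\dots,x_r]$, graded by $\deg y=\deg x_i=2$. Let $\rho,\sigma_1,\dots,\sigma_r$ be the graded $\mathbb{Q}[y]$-algebra automorphisms of $R$ (all fixing $y$) given by: $\rho(x_i)=x_{i+1}$ for $1\le i\le r-1$ and $\rho(x_r)=x_1-y$ (so $\rho^{-1}(x_1)=x_r+y$ and $\rho^{-1}(x_i)=x_{i-1}$ for $i\ge 2$); for $1\le j\le r-1$, $\sigma_j$ swaps $x_j$ and $x_{j+1}$ and fixes the other $x_i$; $\sigma_r(x_1)=x_r+y$, $\sigma_r(x_r)=x_1-y$, $\sigma_r(x_i)=x_i$ for $2\le i\le r-1$. Let $R^{\sigma_i}\subset R$ be the subring of $\sigma_i$-invariants and $B_i=R\otimes_{R^{\sigma_i}}R$, a graded $R$-bimodule. Indices of $\sigma_i$ and $B_i$ are read modulo $r$ (e.g. $B_{r+1}=B_1$). For $\tau\in\{\rho,\rho^{-1}\}$, $B_\tau$ denotes the graded $R$-bimodule which equals $R$ as a left $R$-module, with right action $m\cdot a=m\,\tau(a)$. For $k\in\mathbb{Z}$,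 $B_\rho^{\otimes k}$ is the tensor product over $R$ of $|k|$ copies of $B_\rho$ if $k\ge 0$, of $B_{\rho^{-1}}$ if $k<0$ (and $B_\rho^{\otimes 0}=R$). Grading shift: for a graded module $M$, $M\{p\}_i=M_{i-p}$. *)

theory Defs
  imports Complex_Main "HOL-Library.Poly_Mapping"
begin

text \<open>Polynomials with rational coefficients in variables indexed by nat.
  Variable 0 is y, variable i (1 \<le> i \<le> r) is x_i.  The ring R is the
  subset of polynomials only involving variables 0..r.\<close>

type_synonym poly = "(nat \<Rightarrow>\<^sub>0 nat) \<Rightarrow>\<^sub>0 rat"

definition Var :: "nat \<Rightarrow> poly" where
  "Var v = Poly_Mapping.single (Poly_Mapping.single v 1) 1"

definition Const :: "rat \<Rightarrow> poly" where
  "Const q = Poly_Mapping.single 0 q"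

definition Rset :: "nat \<Rightarrow> poly set" where
  "Rset r = {p. \<forall>m\<in>Poly_Mapping.keys p. \<forall>v\<in>Poly_Mapping.keys m. v \<le> r}"

definition hom_poly :: "poly \<Rightarrow> nat \<Rightarrow> bool" where
  "hom_poly p d \<longleftrightarrow>
     (\<forall>m\<in>Poly_Mapping.keys p. 2 * (\<Sum>v\<in>Poly_Mapping.keys m. Poly_Mapping.lookup m v) = d)"

definition subst :: "(nat \<Rightarrow> poly) \<Rightarrow> poly \<Rightarrow> poly" where
  "subst s p = (\<Sum>m\<in>Poly_Mapping.keys p.
      Const (Poly_Mapping.lookup p m) *
      (\<Prod>v\<in>Poly_Mapping.keys m. s v ^ Poly_Mapping.lookup m v))"

definition rho :: "nat \<Rightarrow> poly \<Rightarrow> poly" where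
  "rho r = subst (\<lambda>v. if v = r then Var 1 - Var 0
                      else if 1 \<le> v \<and> v < r then Var (Suc v) else Var v)"

definition rho_inv :: "nat \<Rightarrow> poly \<Rightarrow> poly" where
  "rho_inv r = subst (\<lambda>v. if v = 1 then Var r + Var 0
                          else if 2 \<le> v \<and> v \<le> r then Var (v - 1) else Var v)"

definition sigma :: "nat \<Rightarrow> nat \<Rightarrow> poly \<Rightarrow> poly" where
  "sigma r j = (if j < r then
       subst (\<lambda>v. if v = j then Var (Suc j) else if v = Suc j then Var j else Var v)
     else
       subst (\<lambda>v. if v = 1 then Var r + Var 0 else if v = r then Var 1 - Var 0 else Var v))"

definition Inv :: "nat \<Rightarrow> nat \<Rightarrow> poly set" where
  "Inv r j = {p \<in> Rset r. sigma r j p = p}"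

text \<open>A tensor product M_1 \<otimes>_R ... \<otimes>_R M_s of the factors R, B_tau = R (right action
  twisted by tau), B_i = R \<otimes>_{R^{sigma_i}} R is realised (flattened) as a quotient of
  the free Q-vector space on lists of elements of R ("slots").  Each slot carries
  a pair (phi, S): phi is the twist of the right action of R on that slot's
  factor, and S is the ring over which this slot is tensored with the next slot.\<close>

datatype factor = Rf | Tw "poly \<Rightarrow> poly" | Bs nat

fun fslots :: "nat \<Rightarrow> factor \<Rightarrow> ((poly \<Rightarrow> poly) \<times> poly set) list" where
  "fslots r Rf = [(id, Rset r)]"
| "fslots r (Tw tau) = [(tau, Rset r)]"
| "fslots r (Bs i) = [(id, Inv r i), (id, Rset r)]"

definition slots :: "nat \<Rightarrow> factor list \<Rightarrow> ((poly \<Rightarrow> poly) \<times> poly set) list" where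
  "slots r fs = concat (map (fslots r) fs)"

definition bpow :: "nat \<Rightarrow> int \<Rightarrow> factor list" where
  "bpow r k = (if k = 0 then [Rf]
               else if k > 0 then replicate (nat k) (Tw (rho r))
               else replicate (nat (- k)) (Tw (rho_inv r)))"

definition bfactors :: "nat \<Rightarrow> int \<Rightarrow> nat list \<Rightarrow> factor list" where
  "bfactors r k is' = bpow r k @ map Bs is'"

type_synonym fv = "poly list \<Rightarrow>\<^sub>0 rat"

definition dl :: "poly list \<Rightarrow> fv" where
  "dl xs = Poly_Mapping.single xs 1"

definition scal :: "rat \<Rightarrow> fv \<Rightarrow> fv" where
  "scal q u = (\<Sum>xs\<in>Poly_Mapping.keys u. Poly_Mapping.single xs (q * Poly_Mapping.lookup u xs))"

definition linext :: "(poly list \<Rightarrow> poly list) \<Rightarrow> fv \<Rightarrow> fv" where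
  "linext g u = (\<Sum>xs\<in>Poly_Mapping.keys u. Poly_Mapping.single (g xs) (Poly_Mapping.lookup u xs))"

definition lists_R :: "nat \<Rightarrow> nat \<Rightarrow> poly list set" where
  "lists_R r t = {xs. length xs = t \<and> set xs \<subseteq> Rset r}"

definition Vfree :: "nat \<Rightarrow> nat \<Rightarrow> fv set" where
  "Vfree r t = {u. Poly_Mapping.keys u \<subseteq> lists_R r t}"

text \<open>Generators of the relations: additivity and Q-homogeneity in each slot,
  and balancing between consecutive slots.\<close>
definition tgens :: "nat \<Rightarrow> ((poly \<Rightarrow> poly) \<times> poly set) list \<Rightarrow> fv set" where
  "tgens r sl =
     {dl (xs[j := a + b]) - dl (xs[j := a]) - dl (xs[j := b]) | xs j a b.
        xs \<in> lists_R r (length sl) \<and> j < length sl \<and> a \<in> Rset r \<and> b \<in> Rset r}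
   \<union> {dl (xs[j := Const q * xs ! j]) - Poly_Mapping.single xs q | xs j q.
        xs \<in> lists_R r (length sl) \<and> j < length sl}
   \<union> {dl (xs[j := xs ! j * fst (sl ! j) c]) - dl (xs[Suc j := c * xs ! Suc j]) | xs j c.
        xs \<in> lists_R r (length sl) \<and> Suc j < length sl \<and> c \<in> snd (sl ! j)}"

inductive_set trel :: "nat \<Rightarrow> ((poly \<Rightarrow> poly) \<times> poly set) list \<Rightarrow> fv set"
  for r sl where
  gen: "g \<in> tgens r sl \<Longrightarrow> g \<in> trel r sl"
| zero: "0 \<in> trel r sl"
| add: "u \<in> trel r sl \<Longrightarrow> v \<in> trel r sl \<Longrightarrow> u + v \<in> trel r sl"
| smul: "u \<in> trel r sl \<Longrightarrow> scal q u \<in> trel r sl"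

text \<open>Equivalence class (element of the tensor product) of a representative.\<close>
definition cls :: "nat \<Rightarrow> ((poly \<Rightarrow> poly) \<times> poly set) list \<Rightarrow> fv \<Rightarrow> fv set" where
  "cls r sl u = {v \<in> Vfree r (length sl). v - u \<in> trel r sl}"

definition tcarrier :: "nat \<Rightarrow> ((poly \<Rightarrow> poly) \<times> poly set) list \<Rightarrow> fv set set" where
  "tcarrier r sl = cls r sl ` Vfree r (length sl)"

definition tzero :: "nat \<Rightarrow> ((poly \<Rightarrow> poly) \<times> poly set) list \<Rightarrow> fv set" where
  "tzero r sl = cls r sl 0"

definition tadd :: "fv set \<Rightarrow> fv set \<Rightarrow> fv set" where
  "tadd A B = {a + b | a b. a \<in> A \<and> b \<in> B}"

definition tlact :: "nat \<Rightarrow> ((poly \<Rightarrow> poly) \<times> poly set) list \<Rightarrow> poly \<Rightarrow> fv set \<Rightarrow> fv set" where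
  "tlact r sl c A = (\<Union>a\<in>A. cls r sl (linext (\<lambda>xs. xs[0 := c * xs ! 0]) a))"

definition tract :: "nat \<Rightarrow> ((poly \<Rightarrow> poly) \<times> poly set) list \<Rightarrow> poly \<Rightarrow> fv set \<Rightarrow> fv set" where
  "tract r sl c A = (\<Union>a\<in>A. cls r sl
      (linext (\<lambda>xs. xs[length sl - 1 := xs ! (length sl - 1) * fst (last sl) c]) a))"

definition hom_list :: "poly list \<Rightarrow> int \<Rightarrow> bool" where
  "hom_list xs p \<longleftrightarrow> (\<exists>ds. length ds = length xs \<and>
      (\<forall>i<length xs. hom_poly (xs ! i) (ds ! i)) \<and> int (sum_list ds) = p)"

definition thom :: "fv set \<Rightarrow> int \<Rightarrow> bool" where
  "thom A p \<longleftrightarrow> (\<exists>u\<in>A. \<forall>xs\<in>Poly_Mapping.keys u. hom_list xs p)"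

definition bihom :: "nat \<Rightarrow> ((poly \<Rightarrow> poly) \<times> poly set) list \<Rightarrow>
    ((poly \<Rightarrow> poly) \<times> poly set) list \<Rightarrow> int \<Rightarrow> (fv set \<Rightarrow> fv set) \<Rightarrow> bool" where
  "bihom r X Y d f \<longleftrightarrow>
     (\<forall>A\<in>tcarrier r X. f A \<in> tcarrier r Y) \<and>
     (\<forall>A\<in>tcarrier r X. \<forall>B\<in>tcarrier r X. f (tadd A B) = tadd (f A) (f B)) \<and>
     (\<forall>c\<in>Rset r. \<forall>A\<in>tcarrier r X. f (tlact r X c A) = tlact r Y c (f A)) \<and>
     (\<forall>c\<in>Rset r. \<forall>A\<in>tcarrier r X. f (tract r X c A) = tract r Y c (f A)) \<and>
     (\<forall>A\<in>tcarrier r X. \<forall>p. thom A p \<longrightarrow> thom (f A) (p + d))"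

end

theory Submission
  imports Defs
begin

lemma pm_expansion:
  fixes u :: "'a \<Rightarrow>\<^sub>0 'b::comm_monoid_add"
  shows "u = (\<Sum>k\<in>Poly_Mapping.keys u. Poly_Mapping.single k (Poly_Mapping.lookup u k))"
proof -
  have *: "finite I \<Longrightarrow> Poly_Mapping.lookup (\<Sum>k\<in>I. Poly_Mapping.single k (Poly_Mapping.lookup u k)) j =
            (if j \<in> I then Poly_Mapping.lookup u j else 0)" for I j
    by (induction I rule: finite_induct) (auto simp: lookup_single lookup_add when_def)
  show ?thesis
    by (rule poly_mapping_eqI) (fastforce simp add: in_keys_iff *)
qed

lemma pm_expansion_superset:
  fixes u :: "'a \<Rightarrow>\<^sub>0 'b::comm_monoid_add"
  assumes "finite K" "Poly_Mapping.keys u \<subseteq> K"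
  shows "u = (\<Sum>k\<in>K. Poly_Mapping.single k (Poly_Mapping.lookup u k))"
proof -
  have "(\<Sum>k\<in>K. Poly_Mapping.single k (Poly_Mapping.lookup u k)) =
        (\<Sum>k\<in>Poly_Mapping.keys u. Poly_Mapping.single k (Poly_Mapping.lookup u k))"
    using assms by (intro sum.mono_neutral_cong_right) (auto simp: in_keys_iff)
  then show ?thesis using pm_expansion[of u] by simp
qed

lemma Const_0[simp]: "Const 0 = 0" by (simp add: Const_def)
lemma Const_1[simp]: "Const 1 = 1" by (simp add: Const_def)
lemma Const_add: "Const (a + b) = Const a + Const b" by (simp add: Const_def single_add)
lemma Const_mult: "Const (a * b) = Const a * Const b" by (simp add: Const_def mult_single)
lemma Const_uminus: "Const (- a) = - Const a" by (simp add: Const_def single_uminus)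
lemma Const_diff: "Const (a - b) = Const a - Const b" by (simp add: Const_def single_diff)
lemma Const_inj: "Const a = Const b \<longleftrightarrow> a = b" by (metis Const_def lookup_single_eq)

lemma lookup_Const_mult: "Poly_Mapping.lookup (Const q * p) m = q * Poly_Mapping.lookup p m"
proof -
  have "Const q * p = Poly_Mapping.map ((*) q) p"
    by (simp add: Const_def mult_map_scale_conv_mult)
  then show ?thesis by (simp add: Poly_Mapping.map.rep_eq when_def)
qed


lemma Var_pow: "Var v ^ n = Poly_Mapping.single (Poly_Mapping.single v n) (1::rat)"
proof (induction n)
  case 0 then show ?case by simp
next
  case (Suc n)
  then show ?case by (simp add: Var_def mult_single single_add[symmetric] add.commute)
qed

lemma single_sum_one:
  "finite V \<Longrightarrow> Poly_Mapping.single (\<Sum>v\<in>V. f v) (1::rat) = (\<Prod>v\<in>V. Poly_Mapping.single (f v) 1)"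
proof (induction V rule: finite_induct)
  case (insert x F)
  have "Poly_Mapping.single (f x + sum f F) (1::rat) = Poly_Mapping.single (f x) 1 * Poly_Mapping.single (sum f F) 1"
    by (simp add: mult_single)
  with insert show ?case by simp
qed simp

definition monsub :: "(nat \<Rightarrow> poly) \<Rightarrow> (nat \<Rightarrow>\<^sub>0 nat) \<Rightarrow> poly" where
  "monsub s m = (\<Prod>v\<in>Poly_Mapping.keys m. s v ^ Poly_Mapping.lookup m v)"

lemma monsub_superset:
  assumes "finite K" "Poly_Mapping.keys m \<subseteq> K"
  shows "monsub s m = (\<Prod>v\<in>K. s v ^ Poly_Mapping.lookup m v)"
  unfolding monsub_def using assms
  by (intro prod.mono_neutral_cong_left) (auto simp: in_keys_iff)

lemma monsub_add: "monsub s (a + b) = monsub s a * monsub s b"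
proof -
  let ?K = "Poly_Mapping.keys a \<union> Poly_Mapping.keys b"
  have "monsub s (a + b) = (\<Prod>v\<in>?K. s v ^ Poly_Mapping.lookup (a+b) v)"
    by (rule monsub_superset) (auto simp: keys_add)
  also have "\<dots> = (\<Prod>v\<in>?K. s v ^ Poly_Mapping.lookup a v * s v ^ Poly_Mapping.lookup b v)"
    by (simp add: lookup_add power_add)
  also have "\<dots> = monsub s a * monsub s b"
    by (simp add: prod.distrib monsub_superset[of ?K])
  finally show ?thesis .
qed

lemma monsub_zero[simp]: "monsub s 0 = 1" by (simp add: monsub_def)

lemma mono_expand: "Poly_Mapping.single m (1::rat) = monsub Var m"
proof -
  have "Poly_Mapping.single m (1::rat) =
     Poly_Mapping.single (\<Sum>v\<in>Poly_Mapping.keys m. Poly_Mapping.single v (Poly_Mapping.lookup m v)) 1"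
    using pm_expansion[of m] by simp
  also have "\<dots> = monsub Var m"
    by (simp add: single_sum_one monsub_def Var_pow)
  finally show ?thesis .
qed

lemma single_Const: "Poly_Mapping.single m c = Const c * monsub Var m"
  by (simp add: Const_def mult_single mono_expand[symmetric])

lemma subst_superset:
  assumes "finite K" "Poly_Mapping.keys p \<subseteq> K"
  shows "subst s p = (\<Sum>m\<in>K. Const (Poly_Mapping.lookup p m) * monsub s m)"
  unfolding subst_def monsub_def[symmetric] using assms
  by (intro sum.mono_neutral_cong_left) (auto simp: in_keys_iff)

lemma subst_add: "subst s (p + q) = subst s p + subst s q"
proof -
  let ?K = "Poly_Mapping.keys p \<union> Poly_Mapping.keys q"
  have "subst s (p + q) = (\<Sum>m\<in>?K. Const (Poly_Mapping.lookup (p+q) m) * monsub s m)"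
    by (rule subst_superset) (auto simp: keys_add)
  also have "\<dots> = (\<Sum>m\<in>?K. Const (Poly_Mapping.lookup p m) * monsub s m
                       + Const (Poly_Mapping.lookup q m) * monsub s m)"
    by (simp add: lookup_add Const_add distrib_right)
  also have "\<dots> = subst s p + subst s q"
    by (simp add: sum.distrib subst_superset[of ?K])
  finally show ?thesis .
qed

lemma subst_zero[simp]: "subst s 0 = 0" by (simp add: subst_def)

lemma subst_single: "subst s (Poly_Mapping.single m c) = Const c * monsub s m"
  by (cases "c = 0") (simp_all add: subst_def monsub_def)

lemma subst_uminus: "subst s (- p) = - subst s p"
  by (metis add_eq_0_iff2 subst_add subst_zero add.commute)

lemma subst_diff: "subst s (p - q) = subst s p - subst s q"
  by (metis diff_conv_add_uminus subst_add subst_uminus)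

lemma subst_sum: "subst s (\<Sum>i\<in>I. f i) = (\<Sum>i\<in>I. subst s (f i))"
  by (induction I rule: infinite_finite_induct) (auto simp: subst_add)

lemma subst_mult: "subst s (p * q) = subst s p * subst s q"
proof -
  have ep: "p = (\<Sum>m\<in>Poly_Mapping.keys p. Poly_Mapping.single m (Poly_Mapping.lookup p m))"
    by (rule pm_expansion)
  have eq: "q = (\<Sum>n\<in>Poly_Mapping.keys q. Poly_Mapping.single n (Poly_Mapping.lookup q n))"
    by (rule pm_expansion)
  have "p * q = (\<Sum>m\<in>Poly_Mapping.keys p. \<Sum>n\<in>Poly_Mapping.keys q.
          Poly_Mapping.single (m + n) (Poly_Mapping.lookup p m * Poly_Mapping.lookup q n))"
    by (subst ep, subst eq) (simp add: sum_product mult_single)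
  then have "subst s (p * q) = (\<Sum>m\<in>Poly_Mapping.keys p. \<Sum>n\<in>Poly_Mapping.keys q.
          (Const (Poly_Mapping.lookup p m) * monsub s m) * (Const (Poly_Mapping.lookup q n) * monsub s n))"
    by (simp add: subst_sum subst_single monsub_add Const_mult mult_ac)
  also have "\<dots> = subst s p * subst s q"
    by (simp add: subst_def monsub_def sum_product)
  finally show ?thesis .
qed

lemma subst_pow: "subst s (p ^ n) = subst s p ^ n"
  by (induction n) (auto simp: subst_mult subst_single Const_def[symmetric] simp del: single_one
      intro: trans[OF _ subst_single[of s 0 1, simplified]])

lemma subst_Const[simp]: "subst s (Const q) = Const q"
  by (simp add: Const_def subst_single)

lemma subst_one[simp]: "subst s 1 = 1"
  using subst_Const[of s 1] by simp

lemma subst_Var[simp]: "subst s (Var v) = s v"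
  by (simp add: Var_def subst_single monsub_def)

lemma subst_prod: "subst s (\<Prod>i\<in>I. f i) = (\<Prod>i\<in>I. subst s (f i))"
  by (induction I rule: infinite_finite_induct) (auto simp: subst_mult)

lemma monsub_subst: "subst s (monsub t m) = monsub (\<lambda>v. subst s (t v)) m"
  by (simp add: monsub_def subst_prod subst_pow)

lemma poly_expand: "p = subst Var p"
proof -
  have "p = (\<Sum>m\<in>Poly_Mapping.keys p. Poly_Mapping.single m (Poly_Mapping.lookup p m))"
    by (rule pm_expansion)
  also have "\<dots> = (\<Sum>m\<in>Poly_Mapping.keys p. Const (Poly_Mapping.lookup p m) * monsub Var m)"
    by (simp add: single_Const)
  finally show ?thesis by (simp add: subst_def monsub_def)
qed


lemma Rset_iff: "p \<in> Rset r \<longleftrightarrow> (\<forall>m\<in>Poly_Mapping.keys p. \<forall>v\<in>Poly_Mapping.keys m. v \<le> r)"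
  by (simp add: Rset_def)

lemma Rset_add[intro]: "p \<in> Rset r \<Longrightarrow> q \<in> Rset r \<Longrightarrow> p + q \<in> Rset r"
  unfolding Rset_iff using keys_add[of p q] by blast

lemma Rset_uminus[intro]: "p \<in> Rset r \<Longrightarrow> - p \<in> Rset r"
  unfolding Rset_iff by (simp add: keys_minus)

lemma Rset_diff[intro]: "p \<in> Rset r \<Longrightarrow> q \<in> Rset r \<Longrightarrow> p - q \<in> Rset r"
  by (metis Rset_add Rset_uminus diff_conv_add_uminus)

lemma Rset_mult[intro]: "p \<in> Rset r \<Longrightarrow> q \<in> Rset r \<Longrightarrow> p * q \<in> Rset r"
proof -
  assume a: "p \<in> Rset r" "q \<in> Rset r"
  show ?thesis unfolding Rset_iff
  proof (intro ballI)
    fix m v assume m: "m \<in> Poly_Mapping.keys (p * q)" and v: "v \<in> Poly_Mapping.keys m"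
    from m keys_mult[of p q] obtain a b where ab: "m = a + b" "a \<in> Poly_Mapping.keys p" "b \<in> Poly_Mapping.keys q"
      by blast
    from v ab keys_add[of a b] have "v \<in> Poly_Mapping.keys a \<or> v \<in> Poly_Mapping.keys b" by blast
    with a ab show "v \<le> r" unfolding Rset_iff by blast
  qed
qed

lemma Rset_Const[intro, simp]: "Const q \<in> Rset r"
  unfolding Rset_iff Const_def by (cases "q = 0") auto

lemma Rset_zero[intro, simp]: "0 \<in> Rset r"
  using Rset_Const[of 0 r] by simp

lemma Rset_one[intro, simp]: "1 \<in> Rset r"
  using Rset_Const[of 1 r] by simp

lemma Rset_Var[intro]: "v \<le> r \<Longrightarrow> Var v \<in> Rset r"
  unfolding Rset_iff Var_def by auto

lemma Rset_sum[intro]: "(\<And>i. i \<in> I \<Longrightarrow> f i \<in> Rset r) \<Longrightarrow> (\<Sum>i\<in>I. f i) \<in> Rset r"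
  by (induction I rule: infinite_finite_induct) auto

lemma Rset_prod[intro]: "(\<And>i. i \<in> I \<Longrightarrow> f i \<in> Rset r) \<Longrightarrow> (\<Prod>i\<in>I. f i) \<in> Rset r"
  by (induction I rule: infinite_finite_induct) auto

lemma Rset_pow[intro]: "p \<in> Rset r \<Longrightarrow> p ^ n \<in> Rset r"
  by (induction n) auto

lemma Rset_subst:
  assumes "p \<in> Rset r" "\<And>v. v \<le> r \<Longrightarrow> s v \<in> Rset r"
  shows "subst s p \<in> Rset r"
  unfolding subst_def
proof (intro Rset_sum Rset_mult Rset_Const Rset_prod Rset_pow)
  fix m v assume "m \<in> Poly_Mapping.keys p" "v \<in> Poly_Mapping.keys m"
  with assms(1) have "v \<le> r" unfolding Rset_iff by blast
  then show "s v \<in> Rset r" using assms(2) by blast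
qed

lemma Rset_induct[consumes 1, case_names Const Var add mult]:
  assumes p: "p \<in> Rset r"
    and C: "\<And>q. P (Const q)" and V: "\<And>v. v \<le> r \<Longrightarrow> P (Var v)"
    and A: "\<And>a b. P a \<Longrightarrow> P b \<Longrightarrow> P (a + b)"
    and M: "\<And>a b. P a \<Longrightarrow> P b \<Longrightarrow> P (a * b)"
  shows "P p"
proof -
  have C0: "P 0" using C[of 0] by simp
  have C1: "P 1" using C[of 1] by simp
  have S: "(\<And>i. i \<in> I \<Longrightarrow> P (f i)) \<Longrightarrow> P (\<Sum>i\<in>I. f i)" for I and f :: "'x \<Rightarrow> poly"
  proof (induction I rule: infinite_finite_induct)
    case (insert x F) then show ?case by (simp add: A)
  qed (simp_all add: C0)
  have Pr: "(\<And>i. i \<in> I \<Longrightarrow> P (f i)) \<Longrightarrow> P (\<Prod>i\<in>I. f i)" for I and f :: "'x \<Rightarrow> poly"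
  proof (induction I rule: infinite_finite_induct)
    case (insert x F) then show ?case by (simp add: M)
  qed (simp_all add: C1)
  have Pw: "P a \<Longrightarrow> P (a ^ n)" for a n
    by (induction n) (simp_all add: M C1)
  have "P (subst Var p)"
    unfolding subst_def
  proof (intro S M C Pr Pw V)
    fix m v assume "m \<in> Poly_Mapping.keys p" "v \<in> Poly_Mapping.keys m"
    with p show "v \<le> r" unfolding Rset_iff by blast
  qed
  then show ?thesis using poly_expand[of p] by simp
qed

lemma Rset_induct2[consumes 1, case_names Const Var add mult]:
  assumes p: "p \<in> Rset r"
    and C: "\<And>q. P (Const q)" and V: "\<And>v. v \<le> r \<Longrightarrow> P (Var v)"
    and A: "\<And>a b. a \<in> Rset r \<Longrightarrow> b \<in> Rset r \<Longrightarrow> P a \<Longrightarrow> P b \<Longrightarrow> P (a + b)"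
    and M: "\<And>a b. a \<in> Rset r \<Longrightarrow> b \<in> Rset r \<Longrightarrow> P a \<Longrightarrow> P b \<Longrightarrow> P (a * b)"
  shows "P p"
proof -
  have "p \<in> Rset r \<and> P p"
    using p
  proof (induction rule: Rset_induct)
    case (Const q) show ?case using C by simp
  next
    case (Var v) then show ?case using V Rset_Var by simp
  next
    case (add a b) then show ?case using A[of a b] Rset_add[of a r b] by simp
  next
    case (mult a b) then show ?case using M[of a b] Rset_mult[of a r b] by simp
  qed
  then show ?thesis by simp
qed

definition rh :: "nat \<Rightarrow> (poly \<Rightarrow> poly) \<Rightarrow> bool" where
  "rh r \<phi> \<longleftrightarrow> (\<forall>a b. \<phi> (a + b) = \<phi> a + \<phi> b) \<and> (\<forall>a b. \<phi> (a * b) = \<phi> a * \<phi> b) \<and>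
     (\<forall>q. \<phi> (Const q) = Const q) \<and> (\<forall>a\<in>Rset r. \<phi> a \<in> Rset r)"

lemma rh_id: "rh r id" by (simp add: rh_def)

lemma rh_subst: "(\<And>v. v \<le> r \<Longrightarrow> s v \<in> Rset r) \<Longrightarrow> rh r (subst s)"
  by (simp add: rh_def subst_add subst_mult Rset_subst)

lemma rh_add: "rh r \<phi> \<Longrightarrow> \<phi> (a + b) = \<phi> a + \<phi> b" by (simp add: rh_def)
lemma rh_mult: "rh r \<phi> \<Longrightarrow> \<phi> (a * b) = \<phi> a * \<phi> b" by (simp add: rh_def)
lemma rh_Const: "rh r \<phi> \<Longrightarrow> \<phi> (Const q) = Const q" by (simp add: rh_def)
lemma rh_Rset: "rh r \<phi> \<Longrightarrow> a \<in> Rset r \<Longrightarrow> \<phi> a \<in> Rset r" by (simp add: rh_def)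
lemma rh_zero: "rh r \<phi> \<Longrightarrow> \<phi> 0 = 0" using rh_Const[of r \<phi> 0] by simp
lemma rh_one: "rh r \<phi> \<Longrightarrow> \<phi> 1 = 1" using rh_Const[of r \<phi> 1] by simp
lemma rh_uminus: "rh r \<phi> \<Longrightarrow> \<phi> (- a) = - \<phi> a"
proof -
  assume h: "rh r \<phi>"
  have "\<phi> a + \<phi> (- a) = 0" using rh_add[OF h, of a "- a"] rh_zero[OF h] by simp
  then show ?thesis by (metis add.commute eq_neg_iff_add_eq_0)
qed
lemma rh_diff: "rh r \<phi> \<Longrightarrow> \<phi> (a - b) = \<phi> a - \<phi> b"
proof -
  assume h: "rh r \<phi>"
  have "\<phi> (a - b) = \<phi> (a + - b)" by simp
  also have "\<dots> = \<phi> a - \<phi> b" unfolding rh_add[OF h] rh_uminus[OF h] by simp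
  finally show ?thesis .
qed

lemma rh_agree:
  assumes "rh r \<phi>" "rh r \<psi>" "\<And>v. v \<le> r \<Longrightarrow> \<phi> (Var v) = \<psi> (Var v)" "p \<in> Rset r"
  shows "\<phi> p = \<psi> p"
proof (rule Rset_induct[OF assms(4), where P="\<lambda>p. \<phi> p = \<psi> p"])
  fix q show "\<phi> (Const q) = \<psi> (Const q)" unfolding rh_Const[OF assms(1)] rh_Const[OF assms(2)] ..
next
  fix v :: nat assume "v \<le> r" then show "\<phi> (Var v) = \<psi> (Var v)" by (rule assms(3))
next
  fix a b assume "\<phi> a = \<psi> a" "\<phi> b = \<psi> b"
  then show "\<phi> (a + b) = \<psi> (a + b)" unfolding rh_add[OF assms(1)] rh_add[OF assms(2)] by simp
next
  fix a b assume "\<phi> a = \<psi> a" "\<phi> b = \<psi> b"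
  then show "\<phi> (a * b) = \<psi> (a * b)" unfolding rh_mult[OF assms(1)] rh_mult[OF assms(2)] by simp
qed

lemma rh_comp: "rh r \<phi> \<Longrightarrow> rh r \<psi> \<Longrightarrow> rh r (\<phi> \<circ> \<psi>)"
  by (simp add: rh_def)

lemma lookup_Var: "Poly_Mapping.lookup (Var v) m = (if m = Poly_Mapping.single v 1 then 1 else 0)"
  by (simp add: Var_def lookup_single when_def)

lemma Var_ne_zero: "Var v \<noteq> 0"
  by (metis Var_def lookup_single_eq lookup_zero one_neq_zero)

lemma single_one_inj: "Poly_Mapping.single v (1::nat) = Poly_Mapping.single w 1 \<longleftrightarrow> v = w"
  by (metis lookup_single_eq lookup_single_not_eq one_neq_zero)

lemma single_Suc0_inj[simp]: "Poly_Mapping.single v (Suc 0) = Poly_Mapping.single w (Suc 0) \<longleftrightarrow> v = w"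
  using single_one_inj by simp

definition sv :: "nat \<Rightarrow> nat \<Rightarrow> nat \<Rightarrow> poly" where
  "sv r j = (if j < r then
       (\<lambda>v. if v = j then Var (Suc j) else if v = Suc j then Var j else Var v)
     else (\<lambda>v. if v = 1 then Var r + Var 0 else if v = r then Var 1 - Var 0 else Var v))"

lemma sigma_subst: "sigma r j = subst (sv r j)"
  by (simp add: sigma_def sv_def)

definition alpha :: "nat \<Rightarrow> nat \<Rightarrow> poly" where
  "alpha r j = (if j < r then Var j - Var (Suc j) else Var 1 - Var r - Var 0)"

context
  fixes r i :: nat
  assumes r3: "3 \<le> r" and i1: "1 \<le> i" and ir: "i \<le> r"
begin

lemma sv_Rset: "v \<le> r \<Longrightarrow> sv r i v \<in> Rset r"
  using r3 ir by (auto simp: sv_def intro!: Rset_Var Rset_add Rset_diff)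

lemma rh_sigma: "rh r (sigma r i)"
  unfolding sigma_subst by (rule rh_subst[OF sv_Rset])

lemma alpha_Rset: "alpha r i \<in> Rset r"
  using r3 ir by (auto simp: alpha_def intro!: Rset_Var Rset_diff)

lemma alpha_ne: "alpha r i \<noteq> 0"
proof
  assume a: "alpha r i = 0"
  show False
  proof (cases "i < r")
    case True
    then have "Poly_Mapping.lookup (alpha r i) (Poly_Mapping.single i 1) = 1"
      using single_one_inj[of i "Suc i"] by (simp add: alpha_def lookup_minus lookup_Var)
    with a show False by simp
  next
    case False
    then have "Poly_Mapping.lookup (alpha r i) (Poly_Mapping.single 1 1) = 1"
      using r3 by (simp add: alpha_def lookup_minus lookup_Var single_one_inj)
    with a show False by simp
  qed
qed

lemma sigma_alpha: "sigma r i (alpha r i) = - alpha r i"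
  using r3 i1 ir by (auto simp: sigma_subst alpha_def sv_def subst_diff)

lemma sigma_Var_Var: "v \<le> r \<Longrightarrow> sigma r i (sigma r i (Var v)) = Var v"
  using r3 i1 ir by (auto simp: sigma_subst sv_def subst_diff subst_add)

lemma sigma_invol: "p \<in> Rset r \<Longrightarrow> sigma r i (sigma r i p) = p"
  using rh_agree[OF rh_comp[OF rh_sigma rh_sigma] rh_id, of p] sigma_Var_Var by simp

lemma sigma_div: "p \<in> Rset r \<Longrightarrow> \<exists>b\<in>Rset r. p - sigma r i p = alpha r i * b"
proof (induction rule: Rset_induct2)
  case (Const q)
  then show ?case by (intro bexI[of _ 0]) (auto simp: rh_Const[OF rh_sigma])
next
  case (Var v)
  show ?case
  proof (cases "i < r")
    case True
    then show ?thesis using Var i1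
      by (intro bexI[of _ "if v = i then 1 else if v = Suc i then -1 else 0"])
        (auto simp: sigma_subst sv_def alpha_def)
  next
    case False
    then have "i = r" using ir by simp
    then show ?thesis using Var r3
      by (intro bexI[of _ "if v = 1 then 1 else if v = r then -1 else 0"])
        (auto simp: sigma_subst sv_def alpha_def algebra_simps)
  qed
next
  case (add a b)
  then obtain ba bb where "ba \<in> Rset r" "bb \<in> Rset r" "a - sigma r i a = alpha r i * ba"
    "b - sigma r i b = alpha r i * bb" by blast
  then show ?case
    by (intro bexI[of _ "ba + bb"]) (auto simp: rh_add[OF rh_sigma] algebra_simps)
next
  case (mult a b)
  then have ra: "a \<in> Rset r" "b \<in> Rset r" by simp_all
  from mult obtain ba bb where bab: "ba \<in> Rset r" "bb \<in> Rset r" "a - sigma r i a = alpha r i * ba"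
    "b - sigma r i b = alpha r i * bb" by blast
  have "a * b - sigma r i (a * b) = (a - sigma r i a) * b + sigma r i a * (b - sigma r i b)"
    by (simp add: rh_mult[OF rh_sigma] algebra_simps)
  also have "\<dots> = alpha r i * (ba * b + sigma r i a * bb)"
    by (simp add: bab algebra_simps)
  finally show ?case
    using bab ra by (intro bexI[of _ "ba * b + sigma r i a * bb"])
       (auto intro!: Rset_add Rset_mult rh_Rset[OF rh_sigma])
qed

end


lemma Inv_iff: "p \<in> Inv r i \<longleftrightarrow> p \<in> Rset r \<and> sigma r i p = p"
  by (simp add: Inv_def)

definition decb :: "nat \<Rightarrow> nat \<Rightarrow> poly \<Rightarrow> poly" where
  "decb r i c = (SOME b. b \<in> Inv r i \<and> c - b * alpha r i \<in> Inv r i)"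

definition deca :: "nat \<Rightarrow> nat \<Rightarrow> poly \<Rightarrow> poly" where
  "deca r i c = c - decb r i c * alpha r i"

definition ssum :: "nat \<Rightarrow> poly" where
  "ssum r = (\<Sum>k<r. Var (Suc k))"

definition Pc :: "nat \<Rightarrow> rat \<Rightarrow> poly" where
  "Pc r c = ssum r + Const c * Var 0"

lemma ssum_Rset: "ssum r \<in> Rset r"
  unfolding ssum_def by (intro Rset_sum Rset_Var) auto

lemma Pc_Rset: "Pc r c \<in> Rset r"
  unfolding Pc_def using ssum_Rset by (intro Rset_add Rset_mult Rset_Const Rset_Var) auto

context
  fixes r i :: nat
  assumes r3: "3 \<le> r" and i1: "1 \<le> i" and ir: "i \<le> r"
begin

lemma Inv_Rset: "p \<in> Inv r i \<Longrightarrow> p \<in> Rset r" by (simp add: Inv_iff)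

lemma Inv_add: "a \<in> Inv r i \<Longrightarrow> b \<in> Inv r i \<Longrightarrow> a + b \<in> Inv r i"
  by (simp add: Inv_iff rh_add[OF rh_sigma[OF r3 i1 ir]] Rset_add)

lemma Inv_mult: "a \<in> Inv r i \<Longrightarrow> b \<in> Inv r i \<Longrightarrow> a * b \<in> Inv r i"
  by (simp add: Inv_iff rh_mult[OF rh_sigma[OF r3 i1 ir]] Rset_mult)

lemma Inv_Const: "Const q \<in> Inv r i"
  by (simp add: Inv_iff rh_Const[OF rh_sigma[OF r3 i1 ir]])

lemma Inv_zero: "0 \<in> Inv r i"
  using Inv_Const[of 0] by simp

lemma Inv_diff: "a \<in> Inv r i \<Longrightarrow> b \<in> Inv r i \<Longrightarrow> a - b \<in> Inv r i"
  by (simp add: Inv_iff rh_diff[OF rh_sigma[OF r3 i1 ir]] Rset_diff)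

lemma sigma_times_alpha: "b \<in> Inv r i \<Longrightarrow> sigma r i (b * alpha r i) = - (b * alpha r i)"
  by (simp add: Inv_iff rh_mult[OF rh_sigma[OF r3 i1 ir]] sigma_alpha[OF r3 i1 ir])

lemma dec_exists: assumes c: "c \<in> Rset r" shows "\<exists>b. b \<in> Inv r i \<and> c - b * alpha r i \<in> Inv r i"
proof -
  note rs = rh_sigma[OF r3 i1 ir]
  obtain b0 where b0: "b0 \<in> Rset r" "c - sigma r i c = alpha r i * b0"
    using sigma_div[OF r3 i1 ir c] by blast
  have "sigma r i (c - sigma r i c) = sigma r i c - c"
    using sigma_invol[OF r3 i1 ir c] by (simp add: rh_diff[OF rs])
  also have "\<dots> = - (alpha r i * b0)" using b0(2) by (simp add: algebra_simps)
  finally have "- (alpha r i * sigma r i b0) = - (alpha r i * b0)"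
    using b0(2) by (simp add: rh_mult[OF rs] sigma_alpha[OF r3 i1 ir])
  then have "sigma r i b0 = b0" using alpha_ne[OF r3 i1 ir] by simp
  with b0 have b0I: "b0 \<in> Inv r i" by (simp add: Inv_iff)
  define b where "b = Const (1/2) * b0"
  have bI: "b \<in> Inv r i" unfolding b_def by (intro Inv_mult Inv_Const b0I)
  have bb: "b + b = b0" unfolding b_def
    by (simp add: distrib_right[symmetric] Const_add[symmetric])
  have aR: "c - b * alpha r i \<in> Rset r"
    using c bI alpha_Rset[OF r3 i1 ir] by (intro Rset_diff Rset_mult) (auto simp: Inv_iff)
  have "sigma r i (c - b * alpha r i) = sigma r i c + b * alpha r i"
    using sigma_times_alpha[OF bI] by (simp add: rh_diff[OF rs])
  also have "\<dots> = c - b * alpha r i"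
  proof -
    have "c - sigma r i c = (b + b) * alpha r i" using b0(2) bb by (simp add: mult.commute)
    then show ?thesis by (simp add: algebra_simps)
  qed
  finally show ?thesis using bI aR by (intro exI[of _ b]) (simp add: Inv_iff)
qed

lemma dec_props:
  assumes "c \<in> Rset r"
  shows "decb r i c \<in> Inv r i" "deca r i c \<in> Inv r i" "c = deca r i c + decb r i c * alpha r i"
proof -
  have "decb r i c \<in> Inv r i \<and> c - decb r i c * alpha r i \<in> Inv r i"
    unfolding decb_def using someI_ex[OF dec_exists[OF assms]] by simp
  then show "decb r i c \<in> Inv r i" "deca r i c \<in> Inv r i" "c = deca r i c + decb r i c * alpha r i"
    by (simp_all add: deca_def)
qed

lemma dec_unique:
  assumes "a \<in> Inv r i" "b \<in> Inv r i" "a' \<in> Inv r i" "b' \<in> Inv r i"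
    and eq: "a + b * alpha r i = a' + b' * alpha r i"
  shows "a = a' \<and> b = b'"
proof -
  note rs = rh_sigma[OF r3 i1 ir]
  have "sigma r i (a + b * alpha r i) = sigma r i (a' + b' * alpha r i)" using eq by simp
  then have eq2: "a - b * alpha r i = a' - b' * alpha r i"
    using assms(1-4) sigma_times_alpha[of b] sigma_times_alpha[of b']
    by (simp add: rh_add[OF rs] Inv_iff)
  from eq eq2 have "(a + b * alpha r i) + (a - b * alpha r i) = (a' + b' * alpha r i) + (a' - b' * alpha r i)"
    by simp
  then have "2 * a = 2 * a'" by (simp add: algebra_simps mult_2)
  then have aa: "a = a'" by simp
  with eq have "b * alpha r i = b' * alpha r i" by simp
  then have "b = b'" using alpha_ne[OF r3 i1 ir] by simp
  with aa show ?thesis by simp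
qed

lemma dec_add:
  assumes "c \<in> Rset r" "d \<in> Rset r"
  shows "decb r i (c + d) = decb r i c + decb r i d \<and> deca r i (c + d) = deca r i c + deca r i d"
proof -
  have cd: "c + d \<in> Rset r" using assms by (rule Rset_add)
  have "deca r i (c + d) = deca r i c + deca r i d \<and> decb r i (c + d) = decb r i c + decb r i d"
  proof (rule dec_unique)
    show "deca r i (c + d) + decb r i (c + d) * alpha r i =
          (deca r i c + deca r i d) + (decb r i c + decb r i d) * alpha r i"
      using dec_props(3)[OF assms(1)] dec_props(3)[OF assms(2)] dec_props(3)[OF cd]
      by (simp add: algebra_simps)
  qed (use dec_props[OF assms(1)] dec_props[OF assms(2)] dec_props[OF cd] in
         \<open>auto intro: Inv_add\<close>)
  then show ?thesis by simp
qed

lemma dec_mult: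
  assumes "z \<in> Inv r i" "c \<in> Rset r"
  shows "decb r i (z * c) = z * decb r i c \<and> deca r i (z * c) = z * deca r i c"
proof -
  have zc: "z * c \<in> Rset r" using assms by (intro Rset_mult) (auto simp: Inv_iff)
  have "deca r i (z * c) = z * deca r i c \<and> decb r i (z * c) = z * decb r i c"
  proof (rule dec_unique)
    show "deca r i (z * c) + decb r i (z * c) * alpha r i =
          z * deca r i c + z * decb r i c * alpha r i"
      using dec_props(3)[OF assms(2)] dec_props(3)[OF zc]
      by (metis distrib_left mult.assoc)
  qed (use assms(1) dec_props[OF assms(2)] dec_props[OF zc] in \<open>auto intro: Inv_mult\<close>)
  then show ?thesis by simp
qed

lemma sigma_ssum: "sigma r i (ssum r) = ssum r"
proof (cases "i < r")
  case True
  define \<tau> where "\<tau> k = (if k = i - 1 then i else if k = i then i - 1 else k)" for k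
  have "sigma r i (ssum r) = (\<Sum>k<r. sv r i (Suc k))"
    by (simp add: sigma_subst ssum_def subst_sum)
  also have "\<dots> = (\<Sum>k<r. Var (Suc (\<tau> k)))"
    using True i1 by (intro sum.cong) (auto simp: sv_def \<tau>_def)
  also have "\<dots> = (\<Sum>k<r. Var (Suc k))"
    by (rule sum.reindex_bij_witness[where i=\<tau> and j=\<tau>]) (use True i1 in \<open>auto simp: \<tau>_def\<close>)
  finally show ?thesis by (simp add: ssum_def)
next
  case False
  then have ir': "i = r" using ir by simp
  obtain m where m: "r = Suc (Suc m)" "1 \<le> m" using r3 by (intro that[of "r - 2"]) auto
  have split: "(\<Sum>k<Suc (Suc m). f k) = f 0 + ((\<Sum>k<m. f (Suc k)) + f (Suc m))"
    for f :: "nat \<Rightarrow> poly"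
  proof -
    have "(\<Sum>k<Suc (Suc m). f k) = f 0 + (\<Sum>k<Suc m. f (Suc k))" by (rule sum.lessThan_Suc_shift)
    also have "(\<Sum>k<Suc m. f (Suc k)) = (\<Sum>k<m. f (Suc k)) + f (Suc m)"
      by (rule sum.lessThan_Suc)
    finally show ?thesis .
  qed
  have "sigma r i (ssum r) = (\<Sum>k<r. sv r r (Suc k))"
    by (simp add: sigma_subst ssum_def subst_sum ir')
  also have "\<dots> = sv r r 1 + ((\<Sum>k<m. sv r r (Suc (Suc k))) + sv r r (Suc (Suc m)))"
    unfolding m(1) split by simp
  also have "\<dots> = (Var r + Var 0) + ((\<Sum>k<m. Var (Suc (Suc k))) + (Var 1 - Var 0))"
  proof -
    have "sv r r 1 = Var r + Var 0" by (simp add: sv_def)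
    moreover have "sv r r (Suc (Suc m)) = Var 1 - Var 0" using m by (simp add: sv_def)
    moreover have "(\<Sum>k<m. sv r r (Suc (Suc k))) = (\<Sum>k<m. Var (Suc (Suc k)))"
      using m by (intro sum.cong) (auto simp: sv_def)
    ultimately show ?thesis by simp
  qed
  also have "\<dots> = Var 1 + ((\<Sum>k<m. Var (Suc (Suc k))) + Var r)" by (simp add: algebra_simps)
  also have "\<dots> = ssum r"
    unfolding ssum_def m(1) split by simp
  finally show ?thesis .
qed

lemma sigma_Pc: "sigma r i (Pc r c) = Pc r c"
proof -
  note rs = rh_sigma[OF r3 i1 ir]
  have v0: "sigma r i (Var 0) = Var 0" using i1 r3 by (simp add: sigma_subst sv_def)
  show ?thesis unfolding Pc_def rh_add[OF rs] rh_mult[OF rs] rh_Const[OF rs] v0 sigma_ssum ..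
qed

lemma Pc_Inv: "Pc r c \<in> Inv r i"
  by (simp add: Inv_iff Pc_Rset sigma_Pc)

end

definition rv :: "nat \<Rightarrow> nat \<Rightarrow> poly" where
  "rv r = (\<lambda>v. if v = r then Var 1 - Var 0 else if 1 \<le> v \<and> v < r then Var (Suc v) else Var v)"

definition riv :: "nat \<Rightarrow> nat \<Rightarrow> poly" where
  "riv r = (\<lambda>v. if v = 1 then Var r + Var 0 else if 2 \<le> v \<and> v \<le> r then Var (v - 1) else Var v)"

lemma rho_subst: "rho r = subst (rv r)" by (simp add: rho_def rv_def)
lemma rho_inv_subst: "rho_inv r = subst (riv r)" by (simp add: rho_inv_def riv_def)

context
  fixes r :: nat
  assumes r3: "3 \<le> r"
begin

lemma rh_rho: "rh r (rho r)"
  unfolding rho_subst using r3 by (intro rh_subst) (auto simp: rv_def intro!: Rset_Var Rset_diff)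

lemma rh_rho_inv: "rh r (rho_inv r)"
  unfolding rho_inv_subst using r3 by (intro rh_subst) (auto simp: riv_def intro!: Rset_Var Rset_add)

lemma rho_Pc: "rho r (Pc r c) = Pc r (c - 1)"
proof -
  obtain n where n: "r = Suc n" "2 \<le> n" using r3 by (intro that[of "r - 1"]) auto
  have "rho r (ssum r) = (\<Sum>k<n. rv r (Suc k)) + rv r (Suc n)"
    by (simp add: rho_subst ssum_def subst_sum subst_add n(1))
  also have "\<dots> = (\<Sum>k<n. Var (Suc (Suc k))) + (Var 1 - Var 0)"
    using n by (auto simp: rv_def intro!: sum.cong)
  also have "\<dots> = ssum r - Var 0"
    unfolding ssum_def n(1) by (simp add: sum.lessThan_Suc_shift del: sum.lessThan_Suc)
  finally have "rho r (ssum r) = ssum r - Var 0" .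
  moreover have "rho r (Var 0) = Var 0" using r3 by (simp add: rho_subst rv_def)
  ultimately have "rho r (Pc r c) = ssum r - Var 0 + Const c * Var 0"
    unfolding Pc_def rh_add[OF rh_rho] rh_mult[OF rh_rho] rh_Const[OF rh_rho] by simp
  then show ?thesis by (simp add: Pc_def Const_diff algebra_simps)
qed

lemma rho_inv_Pc: "rho_inv r (Pc r c) = Pc r (c + 1)"
proof -
  obtain n where n: "r = Suc n" "2 \<le> n" using r3 by (intro that[of "r - 1"]) auto
  have "rho_inv r (ssum r) = riv r 1 + (\<Sum>k<n. riv r (Suc (Suc k)))"
    by (simp add: rho_inv_subst ssum_def subst_sum subst_add n(1) sum.lessThan_Suc_shift del: sum.lessThan_Suc)
  also have "\<dots> = (Var r + Var 0) + (\<Sum>k<n. Var (Suc k))"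
    using n by (auto simp: riv_def intro!: sum.cong)
  also have "\<dots> = ssum r + Var 0"
    unfolding ssum_def n(1) by (simp add: algebra_simps)
  finally have "rho_inv r (ssum r) = ssum r + Var 0" .
  moreover have "rho_inv r (Var 0) = Var 0" using r3 by (simp add: rho_inv_subst riv_def)
  ultimately have "rho_inv r (Pc r c) = ssum r + Var 0 + Const c * Var 0"
    unfolding Pc_def rh_add[OF rh_rho_inv] rh_mult[OF rh_rho_inv] rh_Const[OF rh_rho_inv] by simp
  then show ?thesis by (simp add: Pc_def Const_add algebra_simps)
qed

end


type_synonym trip = "(poly \<Rightarrow> poly) \<times> poly set \<times> nat option \<times> rat"

definition tphi :: "trip \<Rightarrow> poly \<Rightarrow> poly" where "tphi t = fst t"
definition tS :: "trip \<Rightarrow> poly set" where "tS t = fst (snd t)"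
definition tO :: "trip \<Rightarrow> nat option" where "tO t = fst (snd (snd t))"
definition tH :: "trip \<Rightarrow> rat" where "tH t = snd (snd (snd t))"

definition strip :: "trip list \<Rightarrow> ((poly \<Rightarrow> poly) \<times> poly set) list" where
  "strip T = map (\<lambda>t. (tphi t, tS t)) T"

definition goodt :: "nat \<Rightarrow> trip \<Rightarrow> bool" where
  "goodt r t \<longleftrightarrow> rh r (tphi t) \<and> (\<forall>c. tphi t (Pc r c) = Pc r (c - tH t)) \<and>
     (case tO t of None \<Rightarrow> tS t = Rset r | Some i \<Rightarrow> 1 \<le> i \<and> i \<le> r \<and> tS t = Inv r i)"

definition comp :: "nat \<Rightarrow> nat option \<Rightarrow> bool \<Rightarrow> poly \<Rightarrow> poly" where
  "comp r o' b c = (case o' of None \<Rightarrow> (if b then 0 else c)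
                  | Some i \<Rightarrow> (if b then decb r i c else deca r i c))"

definition basis :: "nat \<Rightarrow> nat option \<Rightarrow> bool \<Rightarrow> poly" where
  "basis r o' b = (case o' of None \<Rightarrow> 1 | Some i \<Rightarrow> (if b then alpha r i else 1))"

primrec NF :: "nat \<Rightarrow> trip list \<Rightarrow> poly list \<Rightarrow> bool list \<Rightarrow> poly" where
  "NF r [] xs w = 0"
| "NF r (t # T) xs w = (if T = [] then (if w = [] then hd xs else 0)
     else (case w of [] \<Rightarrow> 0 | b # w' \<Rightarrow> hd xs * tphi t (comp r (tO t) b (NF r T (tl xs) w'))))"

primrec E :: "nat \<Rightarrow> trip list \<Rightarrow> bool list \<Rightarrow> poly list" where
  "E r [] w = []"
| "E r (t # T) w = (if T = [] then []
     else (case w of [] \<Rightarrow> [] | b # w' \<Rightarrow> basis r (tO t) b # E r T w'))"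

lemma NF_single: "NF r [t] xs w = (if w = [] then hd xs else 0)" by simp
lemma NF_cons: "T \<noteq> [] \<Longrightarrow> NF r (t # T) (x # xs) (b # w) = x * tphi t (comp r (tO t) b (NF r T xs w))"
  by simp
lemma NF_cons_Nil: "T \<noteq> [] \<Longrightarrow> NF r (t # T) xs [] = 0" by simp

lemma length_strip[simp]: "length (strip T) = length T" by (simp add: strip_def)
lemma strip_Cons[simp]: "strip (t # T) = (tphi t, tS t) # strip T" by (simp add: strip_def)
lemma strip_nth: "j < length T \<Longrightarrow> strip T ! j = (tphi (T ! j), tS (T ! j))" by (simp add: strip_def)

lemma lists_R_Cons: "x # xs \<in> lists_R r (Suc n) \<longleftrightarrow> x \<in> Rset r \<and> xs \<in> lists_R r n"
  by (auto simp: lists_R_def)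

lemma lists_R_Nil: "xs \<in> lists_R r 0 \<longleftrightarrow> xs = []"
  by (auto simp: lists_R_def)

lemma lists_R_update: "xs \<in> lists_R r n \<Longrightarrow> a \<in> Rset r \<Longrightarrow> xs[j := a] \<in> lists_R r n"
  by (auto simp: lists_R_def dest: set_update_subset_insert[THEN subsetD])

lemma lists_R_nth: "xs \<in> lists_R r n \<Longrightarrow> j < n \<Longrightarrow> xs ! j \<in> Rset r"
  by (auto simp: lists_R_def)

lemma lists_R_length: "xs \<in> lists_R r n \<Longrightarrow> length xs = n"
  by (auto simp: lists_R_def)

lemma lists_R_SucE:
  assumes "xs \<in> lists_R r (Suc n)"
  obtains x xs' where "xs = x # xs'" "x \<in> Rset r" "xs' \<in> lists_R r n"
  using assms by (cases xs) (auto simp: lists_R_def)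

context
  fixes r :: nat
  assumes r3: "3 \<le> r"
begin

lemma goodt_rh: "goodt r t \<Longrightarrow> rh r (tphi t)" by (simp add: goodt_def)
lemma goodt_Pc: "goodt r t \<Longrightarrow> tphi t (Pc r c) = Pc r (c - tH t)" by (simp add: goodt_def)

lemma goodt_cases:
  assumes "goodt r t"
  obtains "tO t = None" "tS t = Rset r" | i where "tO t = Some i" "1 \<le> i" "i \<le> r" "tS t = Inv r i"
  using assms by (cases "tO t") (auto simp: goodt_def)

lemma S_Rset: "goodt r t \<Longrightarrow> z \<in> tS t \<Longrightarrow> z \<in> Rset r"
  by (erule goodt_cases) (auto simp: Inv_iff)

lemma Const_in_S: "goodt r t \<Longrightarrow> Const q \<in> tS t"
proof (erule goodt_cases)
  fix i assume "1 \<le> i" "i \<le> r" "tS t = Inv r i" then show ?thesis using Inv_Const[OF r3] by simp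
qed simp

lemma Pc_in_S: "goodt r t \<Longrightarrow> Pc r c \<in> tS t"
proof (erule goodt_cases)
  fix i assume "1 \<le> i" "i \<le> r" "tS t = Inv r i" then show ?thesis using Pc_Inv[OF r3] by simp
qed (simp add: Pc_Rset)

lemma comp_Rset: "goodt r t \<Longrightarrow> c \<in> Rset r \<Longrightarrow> comp r (tO t) b c \<in> Rset r"
proof (erule goodt_cases)
  assume "tO t = None" "c \<in> Rset r" then show ?thesis by (simp add: comp_def)
next
  fix i assume h: "tO t = Some i" "1 \<le> i" "i \<le> r" "c \<in> Rset r"
  then show ?thesis using dec_props[OF r3 h(2,3,4)] by (auto simp: comp_def Inv_iff)
qed

lemma comp_add: "goodt r t \<Longrightarrow> c \<in> Rset r \<Longrightarrow> d \<in> Rset r \<Longrightarrow>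
    comp r (tO t) b (c + d) = comp r (tO t) b c + comp r (tO t) b d"
proof (erule goodt_cases)
  assume "tO t = None" then show ?thesis by (simp add: comp_def)
next
  fix i assume h: "tO t = Some i" "1 \<le> i" "i \<le> r" "c \<in> Rset r" "d \<in> Rset r"
  then show ?thesis using dec_add[OF r3 h(2,3,4,5)] by (auto simp: comp_def)
qed

lemma comp_mult: "goodt r t \<Longrightarrow> z \<in> tS t \<Longrightarrow> c \<in> Rset r \<Longrightarrow>
    comp r (tO t) b (z * c) = z * comp r (tO t) b c"
proof (erule goodt_cases)
  assume "tO t = None" then show ?thesis by (simp add: comp_def)
next
  fix i assume h: "tO t = Some i" "1 \<le> i" "i \<le> r" "tS t = Inv r i" "z \<in> tS t" "c \<in> Rset r"
  then have "z \<in> Inv r i" by simp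
  then show ?thesis using dec_mult[OF r3 h(2,3) _ h(6)] h(1) by (auto simp: comp_def)
qed

lemma comp_zero: "goodt r t \<Longrightarrow> comp r (tO t) b 0 = 0"
  using comp_mult[of t 0 0 b] Const_in_S[of t 0] by simp

lemma basis_Rset: "goodt r t \<Longrightarrow> basis r (tO t) b \<in> Rset r"
proof (erule goodt_cases)
  fix i assume "tO t = Some i" "1 \<le> i" "i \<le> r" then show ?thesis using alpha_Rset[OF r3] by (simp add: basis_def)
qed (simp add: basis_def)

lemma NF_Rset: "\<forall>t\<in>set T. goodt r t \<Longrightarrow> xs \<in> lists_R r (length T) \<Longrightarrow> NF r T xs w \<in> Rset r"
proof (induction T arbitrary: xs w)
  case Nil then show ?case by simp
next
  case (Cons t T)
  from Cons.prems(2) obtain x xs' where xs: "xs = x # xs'" "x \<in> Rset r" "xs' \<in> lists_R r (length T)"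
    by (auto elim: lists_R_SucE)
  have gt: "goodt r t" using Cons.prems by simp
  show ?case
  proof (cases "T = []")
    case True then show ?thesis using xs by simp
  next
    case False
    show ?thesis
    proof (cases w)
      case Nil then show ?thesis using False by simp
    next
      case (Cons b w')
      have "NF r T xs' w' \<in> Rset r" using Cons.IH[of xs' w'] \<open>\<forall>t\<in>set (t # T). goodt r t\<close> xs by simp
      then have "tphi t (comp r (tO t) b (NF r T xs' w')) \<in> Rset r"
        using gt by (intro rh_Rset[OF goodt_rh[OF gt]] comp_Rset)
      then show ?thesis using False Cons xs by (simp add: Rset_mult)
    qed
  qed
qed

lemma NF_lmult: "T \<noteq> [] \<Longrightarrow> NF r T ((c * x) # xs) w = c * NF r T (x # xs) w"
  by (cases T) (auto split: list.split)

lemma NF_update0: "T \<noteq> [] \<Longrightarrow> xs \<noteq> [] \<Longrightarrow> NF r T (xs[0 := c * xs ! 0]) w = c * NF r T xs w"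
  by (cases xs) (simp_all add: NF_lmult)

lemma NF_add:
  "\<forall>t\<in>set T. goodt r t \<Longrightarrow> xs \<in> lists_R r (length T) \<Longrightarrow> j < length T \<Longrightarrow> a \<in> Rset r \<Longrightarrow> b \<in> Rset r \<Longrightarrow>
   NF r T (xs[j := a + b]) w = NF r T (xs[j := a]) w + NF r T (xs[j := b]) w"
proof (induction T arbitrary: xs w j)
  case Nil then show ?case by simp
next
  case (Cons t T)
  from Cons.prems(2) obtain x xs' where xs: "xs = x # xs'" "x \<in> Rset r" "xs' \<in> lists_R r (length T)"
    by (auto elim: lists_R_SucE)
  have gt: "goodt r t" and gT: "\<forall>t\<in>set T. goodt r t" using Cons.prems by auto
  show ?case
  proof (cases "T = []")
    case True then show ?thesis using xs Cons.prems by simp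
  next
    case False
    show ?thesis
    proof (cases w)
      case Nil then show ?thesis using False by simp
    next
      case (Cons bb w')
      show ?thesis
      proof (cases j)
        case 0 then show ?thesis using False Cons xs by (simp add: algebra_simps)
      next
        case (Suc j')
        have j': "j' < length T" using Suc \<open>j < length (t # T)\<close> by simp
        have IH: "NF r T (xs'[j' := a + b]) w' = NF r T (xs'[j' := a]) w' + NF r T (xs'[j' := b]) w'"
          using Cons.IH[OF gT xs(3) j'] \<open>a \<in> Rset r\<close> \<open>b \<in> Rset r\<close> by simp
        have Ra: "NF r T (xs'[j' := a]) w' \<in> Rset r" "NF r T (xs'[j' := b]) w' \<in> Rset r"
          using NF_Rset[OF gT lists_R_update[OF xs(3)]] \<open>a \<in> Rset r\<close> \<open>b \<in> Rset r\<close> by auto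
        have "comp r (tO t) bb (NF r T (xs'[j' := a + b]) w') =
              comp r (tO t) bb (NF r T (xs'[j' := a]) w') + comp r (tO t) bb (NF r T (xs'[j' := b]) w')"
          unfolding IH by (rule comp_add[OF gt Ra])
        then show ?thesis using False Cons xs Suc
          by (simp add: rh_add[OF goodt_rh[OF gt]] algebra_simps)
      qed
    qed
  qed
qed

lemma NF_Const:
  "\<forall>t\<in>set T. goodt r t \<Longrightarrow> xs \<in> lists_R r (length T) \<Longrightarrow> j < length T \<Longrightarrow>
   NF r T (xs[j := Const q * xs ! j]) w = Const q * NF r T xs w"
proof (induction T arbitrary: xs w j)
  case Nil then show ?case by simp
next
  case (Cons t T)
  from Cons.prems(2) obtain x xs' where xs: "xs = x # xs'" "x \<in> Rset r" "xs' \<in> lists_R r (length T)"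
    by (auto elim: lists_R_SucE)
  have gt: "goodt r t" and gT: "\<forall>t\<in>set T. goodt r t" using Cons.prems by auto
  show ?case
  proof (cases "T = []")
    case True then show ?thesis using xs Cons.prems by simp
  next
    case False
    show ?thesis
    proof (cases w)
      case Nil then show ?thesis using False by simp
    next
      case (Cons bb w')
      show ?thesis
      proof (cases j)
        case 0 then show ?thesis using False Cons xs by (simp add: algebra_simps)
      next
        case (Suc j')
        have j': "j' < length T" using Suc \<open>j < length (t # T)\<close> by simp
        have IH: "NF r T (xs'[j' := Const q * xs' ! j']) w' = Const q * NF r T xs' w'"
          using Cons.IH[OF gT xs(3) j'] by simp
        have R: "NF r T xs' w' \<in> Rset r" using NF_Rset[OF gT xs(3)] by simp
        have "comp r (tO t) bb (NF r T (xs'[j' := Const q * xs' ! j']) w') =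
              Const q * comp r (tO t) bb (NF r T xs' w')"
          unfolding IH by (rule comp_mult[OF gt Const_in_S[OF gt] R])
        then show ?thesis using False Cons xs Suc
          by (simp add: rh_mult[OF goodt_rh[OF gt]] rh_Const[OF goodt_rh[OF gt]] algebra_simps)
      qed
    qed
  qed
qed

lemma NF_bal:
  "\<forall>t\<in>set T. goodt r t \<Longrightarrow> xs \<in> lists_R r (length T) \<Longrightarrow> Suc j < length T \<Longrightarrow> c \<in> tS (T ! j) \<Longrightarrow>
   NF r T (xs[j := xs ! j * tphi (T ! j) c]) w = NF r T (xs[Suc j := c * xs ! Suc j]) w"
proof (induction T arbitrary: xs w j)
  case Nil then show ?case by simp
next
  case (Cons t T)
  from Cons.prems(2) obtain x xs' where xs: "xs = x # xs'" "x \<in> Rset r" "xs' \<in> lists_R r (length T)"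
    by (auto elim: lists_R_SucE)
  have gt: "goodt r t" and gT: "\<forall>t\<in>set T. goodt r t" using Cons.prems by auto
  have False': "T \<noteq> []" using Cons.prems(3) by auto
  show ?case
  proof (cases w)
    case Nil then show ?thesis using False' by simp
  next
    case (Cons bb w')
    show ?thesis
    proof (cases j)
      case 0
      then have c: "c \<in> tS t" using Cons.prems(4) by simp
      from xs(3) False' obtain x1 xs'' where x1: "xs' = x1 # xs''" "x1 \<in> Rset r"
        by (cases T) (auto elim: lists_R_SucE)
      have R: "NF r T xs' w' \<in> Rset r" using NF_Rset[OF gT xs(3)] by simp
      have "NF r T ((c * x1) # xs'') w' = c * NF r T xs' w'"
        using NF_lmult[OF False'] x1 by simp
      then have "comp r (tO t) bb (NF r T ((c * x1) # xs'') w') = c * comp r (tO t) bb (NF r T xs' w')"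
        using comp_mult[OF gt c R] by simp
      then show ?thesis using False' Cons xs 0 x1
        by (simp add: rh_mult[OF goodt_rh[OF gt]] algebra_simps)
    next
      case (Suc j')
      have j': "Suc j' < length T" using Suc Cons.prems(3) by simp
      have c: "c \<in> tS (T ! j')" using Cons.prems(4) Suc by simp
      have IH: "NF r T (xs'[j' := xs' ! j' * tphi (T ! j') c]) w' = NF r T (xs'[Suc j' := c * xs' ! Suc j']) w'"
        using Cons.IH[OF gT xs(3) j' c] by simp
      then show ?thesis using False' Cons xs Suc by simp
    qed
  qed
qed

definition hsum :: "trip list \<Rightarrow> rat" where "hsum T = sum_list (map tH T)"

lemma NF_right:
  "\<forall>t\<in>set T. goodt r t \<Longrightarrow> T \<noteq> [] \<Longrightarrow> xs \<in> lists_R r (length T) \<Longrightarrow>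
   NF r T (xs[length T - 1 := xs ! (length T - 1) * tphi (last T) (Pc r c)]) w = Pc r (c - hsum T) * NF r T xs w"
proof (induction T arbitrary: xs w)
  case Nil then show ?case by simp
next
  case (Cons t T)
  from Cons.prems(3) obtain x xs' where xs: "xs = x # xs'" "x \<in> Rset r" "xs' \<in> lists_R r (length T)"
    by (auto elim: lists_R_SucE)
  have gt: "goodt r t" and gT: "\<forall>t\<in>set T. goodt r t" using Cons.prems by auto
  show ?case
  proof (cases "T = []")
    case True
    then show ?thesis using xs goodt_Pc[OF gt] by (simp add: hsum_def algebra_simps)
  next
    case False
    show ?thesis
    proof (cases w)
      case Nil then show ?thesis using False by simp
    next
      case (Cons bb w')
      obtain n where n: "length T = Suc n" using False by (cases T) auto
      have IH: "NF r T (xs'[length T - 1 := xs' ! (length T - 1) * tphi (last T) (Pc r c)]) w' =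
                Pc r (c - hsum T) * NF r T xs' w'"
        using Cons.IH[OF gT False xs(3)] by simp
      have R: "NF r T xs' w' \<in> Rset r" using NF_Rset[OF gT xs(3)] by simp
      have e1: "(x # xs')[length (t # T) - 1 := (x # xs') ! (length (t # T) - 1) * tphi (last (t # T)) (Pc r c)]
          = x # xs'[length T - 1 := xs' ! (length T - 1) * tphi (last T) (Pc r c)]"
        using n False by simp
      have "comp r (tO t) bb (Pc r (c - hsum T) * NF r T xs' w') = Pc r (c - hsum T) * comp r (tO t) bb (NF r T xs' w')"
        by (rule comp_mult[OF gt Pc_in_S[OF gt] R])
      moreover have "tphi t (Pc r (c - hsum T)) = Pc r (c - hsum (t # T))"
        using goodt_Pc[OF gt] by (simp add: hsum_def algebra_simps)
      ultimately show ?thesis using False Cons xs e1 IH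
        by (simp add: rh_mult[OF goodt_rh[OF gt]] algebra_simps)
    qed
  qed
qed

end


lemma lookup_scal: "Poly_Mapping.lookup (scal q u) xs = q * Poly_Mapping.lookup u xs"
proof -
  have "Poly_Mapping.lookup (scal q u) xs =
        (\<Sum>k\<in>Poly_Mapping.keys u. (q * Poly_Mapping.lookup u k when k = xs))"
    by (simp add: scal_def lookup_sum lookup_single)
  also have "\<dots> = q * Poly_Mapping.lookup u xs"
    by (cases "xs \<in> Poly_Mapping.keys u") (auto simp: when_def in_keys_iff)
  finally show ?thesis .
qed

lemma scal_neg: "scal (-1) u = - u"
  by (rule poly_mapping_eqI) (simp add: lookup_scal)

lemma scal_add: "scal q (u + v) = scal q u + scal q v"
  by (rule poly_mapping_eqI) (simp add: lookup_scal lookup_add algebra_simps)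

lemma scal_diff: "scal q (u - v) = scal q u - scal q v"
  by (rule poly_mapping_eqI) (simp add: lookup_scal lookup_minus algebra_simps)

lemma scal_single: "scal q (Poly_Mapping.single xs a) = Poly_Mapping.single xs (q * a)"
  by (rule poly_mapping_eqI) (simp add: lookup_scal lookup_single when_def)

lemma scal_zero[simp]: "scal q 0 = 0" by (simp add: scal_def)

lemma scal_sum: "scal q (\<Sum>i\<in>I. f i) = (\<Sum>i\<in>I. scal q (f i))"
  by (induction I rule: infinite_finite_induct) (simp_all add: scal_add)

lemma linext_superset:
  assumes "finite K" "Poly_Mapping.keys u \<subseteq> K"
  shows "linext g u = (\<Sum>k\<in>K. Poly_Mapping.single (g k) (Poly_Mapping.lookup u k))"
  unfolding linext_def using assms
  by (intro sum.mono_neutral_cong_left) (auto simp: in_keys_iff)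

lemma linext_add: "linext g (u + v) = linext g u + linext g v"
proof -
  let ?K = "Poly_Mapping.keys u \<union> Poly_Mapping.keys v"
  have "linext g (u + v) = (\<Sum>k\<in>?K. Poly_Mapping.single (g k) (Poly_Mapping.lookup (u + v) k))"
    by (rule linext_superset) (auto simp: keys_add)
  also have "\<dots> = (\<Sum>k\<in>?K. Poly_Mapping.single (g k) (Poly_Mapping.lookup u k) +
                         Poly_Mapping.single (g k) (Poly_Mapping.lookup v k))"
    by (simp add: lookup_add single_add)
  also have "\<dots> = linext g u + linext g v"
    by (simp add: sum.distrib linext_superset[of ?K])
  finally show ?thesis .
qed

lemma linext_zero[simp]: "linext g 0 = 0" by (simp add: linext_def)

lemma linext_single: "linext g (Poly_Mapping.single xs a) = Poly_Mapping.single (g xs) a"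
  by (cases "a = 0") (simp_all add: linext_def)

lemma linext_dl: "linext g (dl xs) = dl (g xs)"
  by (simp add: dl_def linext_single)

lemma linext_uminus: "linext g (- u) = - linext g u"
  by (metis add_eq_0_iff2 linext_add linext_zero add.commute)

lemma linext_diff: "linext g (u - v) = linext g u - linext g v"
  by (metis diff_conv_add_uminus linext_add linext_uminus)

lemma linext_sum: "linext g (\<Sum>i\<in>I. f i) = (\<Sum>i\<in>I. linext g (f i))"
  by (induction I rule: infinite_finite_induct) (auto simp: linext_add)

lemma linext_scal: "linext g (scal q u) = scal q (linext g u)"
proof -
  have "scal q u = (\<Sum>k\<in>Poly_Mapping.keys u. Poly_Mapping.single k (q * Poly_Mapping.lookup u k))"
    by (simp add: scal_def)
  then have "linext g (scal q u) = (\<Sum>k\<in>Poly_Mapping.keys u. Poly_Mapping.single (g k) (q * Poly_Mapping.lookup u k))"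
    by (simp add: linext_sum linext_single)
  also have "\<dots> = scal q (linext g u)"
    by (simp add: linext_def scal_sum scal_single)
  finally show ?thesis .
qed

lemma fv_expand: "u = (\<Sum>xs\<in>Poly_Mapping.keys u. Poly_Mapping.single xs (Poly_Mapping.lookup u xs))"
  by (rule pm_expansion)

lemma trel_neg: "u \<in> trel r sl \<Longrightarrow> - u \<in> trel r sl"
  using trel.smul[of u r sl "-1"] by (simp add: scal_neg)

lemma trel_diff: "u \<in> trel r sl \<Longrightarrow> v \<in> trel r sl \<Longrightarrow> u - v \<in> trel r sl"
  using trel.add[OF _ trel_neg] by (metis diff_conv_add_uminus)

lemma trel_sum: "(\<And>i. i \<in> I \<Longrightarrow> f i \<in> trel r sl) \<Longrightarrow> (\<Sum>i\<in>I. f i) \<in> trel r sl"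
  by (induction I rule: infinite_finite_induct) (auto intro: trel.zero trel.add)

lemma tg_add: "xs \<in> lists_R r (length sl) \<Longrightarrow> j < length sl \<Longrightarrow> a \<in> Rset r \<Longrightarrow> b \<in> Rset r \<Longrightarrow>
  dl (xs[j := a + b]) - dl (xs[j := a]) - dl (xs[j := b]) \<in> trel r sl"
  by (rule trel.gen) (unfold tgens_def, blast)

lemma tg_hom: "xs \<in> lists_R r (length sl) \<Longrightarrow> j < length sl \<Longrightarrow>
  dl (xs[j := Const q * xs ! j]) - Poly_Mapping.single xs q \<in> trel r sl"
  by (rule trel.gen) (unfold tgens_def, blast)

lemma tg_bal: "xs \<in> lists_R r (length sl) \<Longrightarrow> Suc j < length sl \<Longrightarrow> c \<in> snd (sl ! j) \<Longrightarrow>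
  dl (xs[j := xs ! j * fst (sl ! j) c]) - dl (xs[Suc j := c * xs ! Suc j]) \<in> trel r sl"
  by (rule trel.gen) (unfold tgens_def, blast)

lemma trel_zero_slot: "xs \<in> lists_R r (length sl) \<Longrightarrow> j < length sl \<Longrightarrow> dl (xs[j := 0]) \<in> trel r sl"
  using tg_hom[of xs r sl j 0] by simp

lemma trel_cons:
  assumes "u \<in> trel r sl" "x \<in> Rset r"
  shows "linext (Cons x) u \<in> trel r (p # sl)"
  using assms(1)
proof (induction rule: trel.induct)
  case (gen g)
  from gen consider (A) xs j a b where "g = dl (xs[j := a + b]) - dl (xs[j := a]) - dl (xs[j := b])"
      "xs \<in> lists_R r (length sl)" "j < length sl" "a \<in> Rset r" "b \<in> Rset r"
    | (H) xs j q where "g = dl (xs[j := Const q * xs ! j]) - Poly_Mapping.single xs q"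
      "xs \<in> lists_R r (length sl)" "j < length sl"
    | (B) xs j c where "g = dl (xs[j := xs ! j * fst (sl ! j) c]) - dl (xs[Suc j := c * xs ! Suc j])"
      "xs \<in> lists_R r (length sl)" "Suc j < length sl" "c \<in> snd (sl ! j)"
    unfolding tgens_def by blast
  then show ?case
  proof cases
    case A
    have l: "x # xs \<in> lists_R r (length (p # sl))" using A assms(2) by (simp add: lists_R_Cons)
    show ?thesis using tg_add[OF l, of "Suc j" a b] A by (simp add: linext_diff linext_dl)
  next
    case H
    have l: "x # xs \<in> lists_R r (length (p # sl))" using H assms(2) by (simp add: lists_R_Cons)
    show ?thesis using tg_hom[OF l, of "Suc j" q] H by (simp add: linext_diff linext_dl linext_single)
  next
    case B
    have l: "x # xs \<in> lists_R r (length (p # sl))" using B assms(2) by (simp add: lists_R_Cons)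
    show ?thesis using tg_bal[OF l, of "Suc j" c] B by (simp add: linext_diff linext_dl)
  qed
next
  case zero then show ?case by (simp add: trel.zero)
next
  case (add u v) then show ?case by (simp add: linext_add trel.add)
next
  case (smul u q) then show ?case by (simp add: linext_scal trel.smul)
qed

definition Phi :: "nat \<Rightarrow> trip list \<Rightarrow> fv \<Rightarrow> bool list \<Rightarrow> poly" where
  "Phi r T u w = (\<Sum>xs\<in>Poly_Mapping.keys u. Const (Poly_Mapping.lookup u xs) * NF r T xs w)"

lemma Phi_superset:
  assumes "finite K" "Poly_Mapping.keys u \<subseteq> K"
  shows "Phi r T u w = (\<Sum>xs\<in>K. Const (Poly_Mapping.lookup u xs) * NF r T xs w)"
  unfolding Phi_def using assms
  by (intro sum.mono_neutral_cong_left) (auto simp: in_keys_iff)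

lemma Phi_add: "Phi r T (u + v) w = Phi r T u w + Phi r T v w"
proof -
  let ?K = "Poly_Mapping.keys u \<union> Poly_Mapping.keys v"
  have "Phi r T (u + v) w = (\<Sum>xs\<in>?K. Const (Poly_Mapping.lookup (u + v) xs) * NF r T xs w)"
    by (rule Phi_superset) (auto simp: keys_add)
  also have "\<dots> = (\<Sum>xs\<in>?K. Const (Poly_Mapping.lookup u xs) * NF r T xs w +
                          Const (Poly_Mapping.lookup v xs) * NF r T xs w)"
    by (simp add: lookup_add Const_add distrib_right)
  also have "\<dots> = Phi r T u w + Phi r T v w"
    by (simp add: sum.distrib Phi_superset[of ?K])
  finally show ?thesis .
qed

lemma Phi_zero[simp]: "Phi r T 0 w = 0" by (simp add: Phi_def)

lemma Phi_single: "Phi r T (Poly_Mapping.single xs q) w = Const q * NF r T xs w"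
  by (cases "q = 0") (simp_all add: Phi_def)

lemma Phi_dl: "Phi r T (dl xs) w = NF r T xs w"
  by (simp add: dl_def Phi_single)

lemma Phi_uminus: "Phi r T (- u) w = - Phi r T u w"
  by (metis add_eq_0_iff2 Phi_add Phi_zero add.commute)

lemma Phi_diff: "Phi r T (u - v) w = Phi r T u w - Phi r T v w"
  by (metis diff_conv_add_uminus Phi_add Phi_uminus)

lemma Phi_sum: "Phi r T (\<Sum>i\<in>I. f i) w = (\<Sum>i\<in>I. Phi r T (f i) w)"
  by (induction I rule: infinite_finite_induct) (auto simp: Phi_add)

lemma Phi_scal: "Phi r T (scal q u) w = Const q * Phi r T u w"
proof -
  have "Phi r T (scal q u) w = (\<Sum>xs\<in>Poly_Mapping.keys u.
          Phi r T (Poly_Mapping.single xs (q * Poly_Mapping.lookup u xs)) w)"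
    unfolding scal_def by (rule Phi_sum)
  also have "\<dots> = (\<Sum>xs\<in>Poly_Mapping.keys u. Const q * (Const (Poly_Mapping.lookup u xs) * NF r T xs w))"
    by (simp add: Phi_single Const_mult mult.assoc)
  also have "\<dots> = Const q * Phi r T u w" by (simp add: Phi_def sum_distrib_left)
  finally show ?thesis .
qed

lemma Phi_linext: "Phi r T (linext g u) w =
   (\<Sum>xs\<in>Poly_Mapping.keys u. Const (Poly_Mapping.lookup u xs) * NF r T (g xs) w)"
  by (simp add: linext_def Phi_sum Phi_single)

context
  fixes r :: nat
  assumes r3: "3 \<le> r"
begin

lemma Phi_trel:
  assumes g: "\<forall>t\<in>set T. goodt r t" and u: "u \<in> trel r (strip T)"
  shows "Phi r T u w = 0"
  using u
proof (induction rule: trel.induct)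
  case (gen g')
  from gen consider (A) xs j a b where "g' = dl (xs[j := a + b]) - dl (xs[j := a]) - dl (xs[j := b])"
      "xs \<in> lists_R r (length T)" "j < length T" "a \<in> Rset r" "b \<in> Rset r"
    | (H) xs j q where "g' = dl (xs[j := Const q * xs ! j]) - Poly_Mapping.single xs q"
      "xs \<in> lists_R r (length T)" "j < length T"
    | (B) xs j c where "g' = dl (xs[j := xs ! j * fst (strip T ! j) c]) - dl (xs[Suc j := c * xs ! Suc j])"
      "xs \<in> lists_R r (length T)" "Suc j < length T" "c \<in> snd (strip T ! j)"
    unfolding tgens_def by auto
  then show ?case
  proof cases
    case A then show ?thesis using NF_add[OF r3 g, of xs j a b w] by (simp add: Phi_diff Phi_dl)
  next
    case H then show ?thesis using NF_Const[OF r3 g, of xs j q w] by (simp add: Phi_diff Phi_dl Phi_single)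
  next
    case B
    then have "c \<in> tS (T ! j)" "fst (strip T ! j) = tphi (T ! j)" by (simp_all add: strip_nth)
    then show ?thesis using B NF_bal[OF r3 g, of xs j c w] by (simp add: Phi_diff Phi_dl)
  qed
next
  case zero then show ?case by simp
next
  case (add u v) then show ?case by (simp add: Phi_add)
next
  case (smul u q) then show ?case by (simp add: Phi_scal)
qed

end


definition Wd :: "nat \<Rightarrow> bool list set" where "Wd n = {w. length w = n}"

lemma Wd_finite: "finite (Wd n)"
proof -
  have "Wd n = {xs. set xs \<subseteq> (UNIV :: bool set) \<and> length xs = n}" by (simp add: Wd_def)
  then show ?thesis using finite_lists_length_eq[of "UNIV :: bool set" n] by simp
qed

lemma Wd_0: "Wd 0 = {[]}" by (auto simp: Wd_def)

lemma sum_Wd_Suc: "(\<Sum>w\<in>Wd (Suc n). f w) = (\<Sum>w\<in>Wd n. f (False # w) + f (True # w))"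
proof -
  have eq: "Wd (Suc n) = Cons False ` Wd n \<union> Cons True ` Wd n"
  proof
    show "Wd (Suc n) \<subseteq> Cons False ` Wd n \<union> Cons True ` Wd n"
    proof
      fix w assume "w \<in> Wd (Suc n)"
      then obtain b w' where "w = b # w'" "length w' = n" by (auto simp: Wd_def length_Suc_conv)
      then show "w \<in> Cons False ` Wd n \<union> Cons True ` Wd n" by (cases b) (auto simp: Wd_def)
    qed
  qed (auto simp: Wd_def)
  have "(\<Sum>w\<in>Wd (Suc n). f w) = (\<Sum>w\<in>Cons False ` Wd n. f w) + (\<Sum>w\<in>Cons True ` Wd n. f w)"
    unfolding eq by (rule sum.union_disjoint) (auto simp: Wd_finite)
  also have "\<dots> = (\<Sum>w\<in>Wd n. f (False # w)) + (\<Sum>w\<in>Wd n. f (True # w))"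
    by (simp add: sum.reindex)
  finally show ?thesis by (simp add: sum.distrib)
qed

context
  fixes r :: nat
  assumes r3: "3 \<le> r"
begin

lemma E_lists: "\<forall>t\<in>set T. goodt r t \<Longrightarrow> w \<in> Wd (length T - 1) \<Longrightarrow> E r T w \<in> lists_R r (length T - 1)"
proof (induction T arbitrary: w)
  case Nil then show ?case by (simp add: lists_R_def)
next
  case (Cons t T)
  show ?case
  proof (cases "T = []")
    case True then show ?thesis by (simp add: lists_R_def)
  next
    case False
    then obtain n where n: "length T = Suc n" by (cases T) auto
    from Cons.prems(2) n obtain b w' where w: "w = b # w'" "w' \<in> Wd n"
      by (auto simp: Wd_def length_Suc_conv)
    have "E r T w' \<in> lists_R r n" using Cons.IH[of w'] Cons.prems(1) w n by simp
    moreover have "basis r (tO t) b \<in> Rset r" using Cons.prems(1) basis_Rset[OF r3] by simp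
    ultimately show ?thesis using False w n by (simp add: lists_R_Cons)
  qed
qed

lemma split2:
  assumes gt: "goodt r t" and x: "x \<in> Rset r" and c: "c \<in> Rset r" and e: "e \<in> lists_R r n"
    and sl: "length sl' = Suc n"
  shows "dl (x # c # e) - dl (x * tphi t (comp r (tO t) False c) # basis r (tO t) False # e)
         - dl (x * tphi t (comp r (tO t) True c) # basis r (tO t) True # e) \<in> trel r ((tphi t, tS t) # sl')"
    (is "_ \<in> trel r ?sl")
proof (rule goodt_cases[OF r3 gt])
  assume o: "tO t = None" "tS t = Rset r"
  have l1: "x # 1 # e \<in> lists_R r (length ?sl)" using x e sl by (simp add: lists_R_Cons)
  have B: "dl (x * tphi t c # 1 # e) - dl (x # c # e) \<in> trel r ?sl"
    using tg_bal[OF l1, of 0 c] o c sl by simp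
  have Z: "dl (0 # 1 # e) \<in> trel r ?sl"
    using trel_zero_slot[OF l1, of 0] by simp
  have "dl (x # c # e) - dl (x * tphi t (comp r (tO t) False c) # basis r (tO t) False # e)
         - dl (x * tphi t (comp r (tO t) True c) # basis r (tO t) True # e)
        = - (dl (x * tphi t c # 1 # e) - dl (x # c # e)) - dl (0 # 1 # e)" (is "?L = _")
    using o rh_zero[OF goodt_rh[OF r3 gt]] by (simp add: comp_def basis_def)
  note eq = this
  show "?L \<in> trel r ?sl" unfolding eq by (rule trel_diff[OF trel_neg[OF B] Z])
next
  fix i assume o: "tO t = Some i" "1 \<le> i" "i \<le> r" "tS t = Inv r i"
  define a where "a = deca r i c"
  define b where "b = decb r i c"
  have ab: "a \<in> Inv r i" "b \<in> Inv r i" "c = a + b * alpha r i"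
    using dec_props[OF r3 o(2,3) c] by (simp_all add: a_def b_def)
  have aR: "a \<in> Rset r" "b \<in> Rset r" using ab by (simp_all add: Inv_iff)
  have alR: "alpha r i \<in> Rset r" using alpha_Rset[OF r3 o(2,3)] .
  have l0: "x # c # e \<in> lists_R r (length ?sl)" using x c e sl by (simp add: lists_R_Cons)
  have l1: "x # 1 # e \<in> lists_R r (length ?sl)" using x e sl by (simp add: lists_R_Cons)
  have l2: "x # alpha r i # e \<in> lists_R r (length ?sl)" using x e sl alR by (simp add: lists_R_Cons)
  have A: "dl (x # (a + b * alpha r i) # e) - dl (x # a # e) - dl (x # (b * alpha r i) # e) \<in> trel r ?sl"
    using tg_add[OF l0, of 1 a "b * alpha r i"] aR alR sl by (simp add: Rset_mult)
  have B1: "dl (x * tphi t a # 1 # e) - dl (x # a # e) \<in> trel r ?sl"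
    using tg_bal[OF l1, of 0 a] o ab sl by simp
  have B2: "dl (x * tphi t b # alpha r i # e) - dl (x # (b * alpha r i) # e) \<in> trel r ?sl"
    using tg_bal[OF l2, of 0 b] o ab sl by simp
  have "dl (x # c # e) - dl (x * tphi t (comp r (tO t) False c) # basis r (tO t) False # e)
         - dl (x * tphi t (comp r (tO t) True c) # basis r (tO t) True # e)
        = (dl (x # (a + b * alpha r i) # e) - dl (x # a # e) - dl (x # (b * alpha r i) # e))
          - (dl (x * tphi t a # 1 # e) - dl (x # a # e))
          - (dl (x * tphi t b # alpha r i # e) - dl (x # (b * alpha r i) # e))" (is "?L = ?R")
  proof -
    have cc: "dl (x # c # e) = dl (x # (a + b * alpha r i) # e)" using ab(3) by simp
    show ?thesis using o by (simp add: comp_def basis_def a_def[symmetric] b_def[symmetric] cc)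
  qed
  moreover have "?R \<in> trel r ?sl" by (rule trel_diff[OF trel_diff[OF A B1] B2])
  ultimately show "?L \<in> trel r ?sl" by simp
qed

lemma recon:
  "\<forall>t\<in>set T. goodt r t \<Longrightarrow> T \<noteq> [] \<Longrightarrow> xs \<in> lists_R r (length T) \<Longrightarrow>
   dl xs - (\<Sum>w\<in>Wd (length T - 1). dl (NF r T xs w # E r T w)) \<in> trel r (strip T)"
proof (induction T arbitrary: xs)
  case Nil then show ?case by simp
next
  case (Cons t T)
  from Cons.prems(3) obtain x xs' where xs: "xs = x # xs'" "x \<in> Rset r" "xs' \<in> lists_R r (length T)"
    by (auto elim: lists_R_SucE)
  have gt: "goodt r t" and gT: "\<forall>t\<in>set T. goodt r t" using Cons.prems by auto
  show ?case
  proof (cases "T = []")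
    case True
    then show ?thesis using xs by (simp add: Wd_0 lists_R_Nil trel.zero)
  next
    case False
    have Tne: "T \<noteq> []" using False .
    then obtain n where n: "length T = Suc n" by (cases T) auto
    let ?c = "\<lambda>w'. NF r T xs' w'" and ?e = "\<lambda>w'. E r T w'"
    have IH: "dl xs' - (\<Sum>w\<in>Wd n. dl (?c w # ?e w)) \<in> trel r (strip T)"
      using Cons.IH[OF gT False xs(3)] n by simp
    have L: "dl (x # xs') - (\<Sum>w\<in>Wd n. dl (x # ?c w # ?e w)) \<in> trel r (strip (t # T))"
      using trel_cons[OF IH xs(2), of "(tphi t, tS t)"]
      by (simp add: linext_diff linext_dl linext_sum)
    let ?F = "\<lambda>b w'. dl (x * tphi t (comp r (tO t) b (?c w')) # basis r (tO t) b # ?e w')"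
    have D: "(\<Sum>w\<in>Wd n. dl (x # ?c w # ?e w) - ?F False w - ?F True w) \<in> trel r (strip (t # T))"
    proof (rule trel_sum)
      fix w assume w: "w \<in> Wd n"
      have c: "?c w \<in> Rset r" using NF_Rset[OF r3 gT xs(3)] .
      have e: "?e w \<in> lists_R r n" using E_lists[OF gT, of w] w n by simp
      show "dl (x # ?c w # ?e w) - ?F False w - ?F True w \<in> trel r (strip (t # T))"
        using split2[OF gt xs(2) c e, of "strip T"] n by simp
    qed
    have S: "(\<Sum>w\<in>Wd (length (t # T) - 1). dl (NF r (t # T) xs w # E r (t # T) w))
           = (\<Sum>w\<in>Wd n. ?F False w + ?F True w)"
    proof -
      have ln: "length (t # T) - 1 = Suc n" using n by simp
      have "(\<Sum>w\<in>Wd (length (t # T) - 1). dl (NF r (t # T) xs w # E r (t # T) w))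
          = (\<Sum>w\<in>Wd n. dl (NF r (t # T) xs (False # w) # E r (t # T) (False # w))
                          + dl (NF r (t # T) xs (True # w) # E r (t # T) (True # w)))"
        unfolding ln by (rule sum_Wd_Suc)
      moreover have "\<And>b w. NF r (t # T) xs (b # w) = x * tphi t (comp r (tO t) b (NF r T xs' w))"
        using Tne xs by simp
      moreover have "\<And>b w. E r (t # T) (b # w) = basis r (tO t) b # E r T w"
        using Tne by simp
      ultimately show ?thesis using Tne n by simp
    qed
    have "dl xs - (\<Sum>w\<in>Wd (length (t # T) - 1). dl (NF r (t # T) xs w # E r (t # T) w))
        = (dl (x # xs') - (\<Sum>w\<in>Wd n. dl (x # ?c w # ?e w)))
          + (\<Sum>w\<in>Wd n. dl (x # ?c w # ?e w) - ?F False w - ?F True w)" (is "?L = ?R")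
      unfolding S by (simp add: xs(1) sum_subtractf algebra_simps)
    moreover have "?R \<in> trel r (strip (t # T))" by (rule trel.add[OF L D])
    ultimately show ?thesis by simp
  qed
qed

lemma lin0:
  assumes I: "finite I" and p: "\<And>i. i \<in> I \<Longrightarrow> p i \<in> Rset r"
    and e: "0 # e \<in> lists_R r (length sl)"
  shows "(\<Sum>i\<in>I. Poly_Mapping.single (p i # e) (q i)) - dl ((\<Sum>i\<in>I. Const (q i) * p i) # e) \<in> trel r sl"
  using I p
proof (induction I rule: finite_induct)
  case empty
  have "dl (0 # e) \<in> trel r sl" using trel_zero_slot[OF e, of 0] e by (cases sl) (auto simp: lists_R_def)
  then show ?case by (simp add: trel_neg)
next
  case (insert i F)
  let ?S = "\<Sum>i\<in>F. Const (q i) * p i"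
  have SR: "?S \<in> Rset r" using insert.prems by (intro Rset_sum Rset_mult) auto
  have pR: "p i \<in> Rset r" using insert.prems by simp
  have l: "p i # e \<in> lists_R r (length sl)" using e pR by (auto simp: lists_R_def)
  have jl: "0 < length sl" using e by (auto simp: lists_R_def)
  have H: "dl (Const (q i) * p i # e) - Poly_Mapping.single (p i # e) (q i) \<in> trel r sl"
    using tg_hom[OF l jl, of "q i"] by simp
  have A: "dl ((Const (q i) * p i + ?S) # e) - dl (Const (q i) * p i # e) - dl (?S # e) \<in> trel r sl"
    using tg_add[OF l jl, of "Const (q i) * p i" ?S] SR pR by (simp add: Rset_mult)
  have IH: "(\<Sum>i\<in>F. Poly_Mapping.single (p i # e) (q i)) - dl (?S # e) \<in> trel r sl"
    using insert by simp
  have "(\<Sum>i\<in>insert i F. Poly_Mapping.single (p i # e) (q i)) - dl ((\<Sum>i\<in>insert i F. Const (q i) * p i) # e)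
      = ((\<Sum>i\<in>F. Poly_Mapping.single (p i # e) (q i)) - dl (?S # e))
        - (dl (Const (q i) * p i # e) - Poly_Mapping.single (p i # e) (q i))
        - (dl ((Const (q i) * p i + ?S) # e) - dl (Const (q i) * p i # e) - dl (?S # e))" (is "?L = ?R")
    using insert.hyps by (simp add: algebra_simps)
  moreover have "?R \<in> trel r sl" by (rule trel_diff[OF trel_diff[OF IH H] A])
  ultimately show ?case by simp
qed

lemma recon_Phi:
  assumes g: "\<forall>t\<in>set T. goodt r t" and T: "T \<noteq> []" and u: "u \<in> Vfree r (length T)"
  shows "u - (\<Sum>w\<in>Wd (length T - 1). dl (Phi r T u w # E r T w)) \<in> trel r (strip T)"
proof -
  let ?K = "Poly_Mapping.keys u" and ?W = "Wd (length T - 1)"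
  let ?q = "\<lambda>xs. Poly_Mapping.lookup u xs"
  have K: "\<And>xs. xs \<in> ?K \<Longrightarrow> xs \<in> lists_R r (length T)" using u by (auto simp: Vfree_def)
  have S1: "(\<Sum>xs\<in>?K. scal (?q xs) (dl xs - (\<Sum>w\<in>?W. dl (NF r T xs w # E r T w)))) \<in> trel r (strip T)"
  proof (rule trel_sum)
    fix xs assume "xs \<in> ?K"
    show "scal (?q xs) (dl xs - (\<Sum>w\<in>?W. dl (NF r T xs w # E r T w))) \<in> trel r (strip T)"
      by (rule trel.smul, rule recon[OF g T K[OF \<open>xs \<in> ?K\<close>]])
  qed
  have eq1: "(\<Sum>xs\<in>?K. scal (?q xs) (dl xs - (\<Sum>w\<in>?W. dl (NF r T xs w # E r T w))))
      = u - (\<Sum>w\<in>?W. \<Sum>xs\<in>?K. Poly_Mapping.single (NF r T xs w # E r T w) (?q xs))"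
  proof -
    have "(\<Sum>xs\<in>?K. scal (?q xs) (dl xs - (\<Sum>w\<in>?W. dl (NF r T xs w # E r T w))))
        = (\<Sum>xs\<in>?K. Poly_Mapping.single xs (?q xs)) -
          (\<Sum>xs\<in>?K. \<Sum>w\<in>?W. Poly_Mapping.single (NF r T xs w # E r T w) (?q xs))"
      by (simp add: scal_diff scal_sum scal_single dl_def sum_subtractf)
    also have "\<dots> = u - (\<Sum>w\<in>?W. \<Sum>xs\<in>?K. Poly_Mapping.single (NF r T xs w # E r T w) (?q xs))"
      using fv_expand[of u] sum.swap[of "\<lambda>xs w. Poly_Mapping.single (NF r T xs w # E r T w) (?q xs)" ?W ?K]
      by simp
    finally show ?thesis .
  qed
  have S2: "(\<Sum>w\<in>?W. (\<Sum>xs\<in>?K. Poly_Mapping.single (NF r T xs w # E r T w) (?q xs))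
              - dl (Phi r T u w # E r T w)) \<in> trel r (strip T)"
  proof (rule trel_sum)
    fix w assume w: "w \<in> ?W"
    have e: "0 # E r T w \<in> lists_R r (length (strip T))"
      using E_lists[OF g w] T by (cases T) (auto simp: lists_R_def)
    show "(\<Sum>xs\<in>?K. Poly_Mapping.single (NF r T xs w # E r T w) (?q xs)) - dl (Phi r T u w # E r T w) \<in> trel r (strip T)"
      using lin0[OF finite_keys[of u] _ e, where p="\<lambda>xs. NF r T xs w" and q="?q"] NF_Rset[OF r3 g K] by (simp add: Phi_def)
  qed
  have "u - (\<Sum>w\<in>?W. dl (Phi r T u w # E r T w))
      = (\<Sum>xs\<in>?K. scal (?q xs) (dl xs - (\<Sum>w\<in>?W. dl (NF r T xs w # E r T w))))
        + (\<Sum>w\<in>?W. (\<Sum>xs\<in>?K. Poly_Mapping.single (NF r T xs w # E r T w) (?q xs)) - dl (Phi r T u w # E r T w))"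
    (is "?L = ?R") unfolding eq1 by (simp add: sum_subtractf)
  moreover have "?R \<in> trel r (strip T)" by (rule trel.add[OF S1 S2])
  ultimately show ?thesis by simp
qed

lemma Phi_zero_trel:
  assumes g: "\<forall>t\<in>set T. goodt r t" and T: "T \<noteq> []" and u: "u \<in> Vfree r (length T)"
    and z: "\<And>w. Phi r T u w = 0"
  shows "u \<in> trel r (strip T)"
proof -
  have Z: "(\<Sum>w\<in>Wd (length T - 1). dl (0 # E r T w)) \<in> trel r (strip T)"
  proof (rule trel_sum)
    fix w assume w: "w \<in> Wd (length T - 1)"
    have e: "0 # E r T w \<in> lists_R r (length (strip T))"
      using E_lists[OF g w] T by (cases T) (auto simp: lists_R_def)
    show "dl (0 # E r T w) \<in> trel r (strip T)" using trel_zero_slot[OF e, of 0] T by simp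
  qed
  have A: "u - (\<Sum>w\<in>Wd (length T - 1). dl (0 # E r T w)) \<in> trel r (strip T)"
    using recon_Phi[OF g T u] by (simp add: z)
  have "(u - (\<Sum>w\<in>Wd (length T - 1). dl (0 # E r T w))) + (\<Sum>w\<in>Wd (length T - 1). dl (0 # E r T w))
     \<in> trel r (strip T)" by (rule trel.add[OF A Z])
  then show ?thesis by simp
qed

end


definition Mup :: "nat \<Rightarrow> poly \<Rightarrow> poly list \<Rightarrow> poly list" where
  "Mup j0 m xs = xs[j0 := xs ! j0 * m]"

lemma Mup_lists: "xs \<in> lists_R r n \<Longrightarrow> j0 < n \<Longrightarrow> m \<in> Rset r \<Longrightarrow> Mup j0 m xs \<in> lists_R r n"
  unfolding Mup_def by (intro lists_R_update Rset_mult lists_R_nth) auto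

lemma Mup_upd_eq: "j0 < length xs \<Longrightarrow> Mup j0 m (xs[j0 := v]) = (Mup j0 m xs)[j0 := v * m]"
  by (simp add: Mup_def)

lemma Mup_upd_neq: "j \<noteq> j0 \<Longrightarrow> Mup j0 m (xs[j := v]) = (Mup j0 m xs)[j := v]"
  by (simp add: Mup_def list_update_swap)

lemma Mup_nth_neq: "j \<noteq> j0 \<Longrightarrow> Mup j0 m xs ! j = xs ! j"
  by (simp add: Mup_def)

lemma Mup_nth_eq: "j0 < length xs \<Longrightarrow> Mup j0 m xs ! j0 = xs ! j0 * m"
  by (simp add: Mup_def)

lemma trel_Mup:
  assumes u: "u \<in> trel r sl" and m: "m \<in> Rset r" and j0: "j0 < length sl"
  shows "linext (Mup j0 m) u \<in> trel r sl"
  using u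
proof (induction rule: trel.induct)
  case (gen g)
  from gen consider (A) xs j a b where "g = dl (xs[j := a + b]) - dl (xs[j := a]) - dl (xs[j := b])"
      "xs \<in> lists_R r (length sl)" "j < length sl" "a \<in> Rset r" "b \<in> Rset r"
    | (H) xs j q where "g = dl (xs[j := Const q * xs ! j]) - Poly_Mapping.single xs q"
      "xs \<in> lists_R r (length sl)" "j < length sl"
    | (B) xs j c where "g = dl (xs[j := xs ! j * fst (sl ! j) c]) - dl (xs[Suc j := c * xs ! Suc j])"
      "xs \<in> lists_R r (length sl)" "Suc j < length sl" "c \<in> snd (sl ! j)"
    unfolding tgens_def by blast
  then show ?case
  proof cases
    case A
    have len: "length xs = length sl" using A(2) by (simp add: lists_R_length)
    have l: "Mup j0 m xs \<in> lists_R r (length sl)" using Mup_lists[OF A(2) j0 m] .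
    show ?thesis
    proof (cases "j = j0")
      case True
      have "linext (Mup j0 m) g = dl ((Mup j0 m xs)[j := a * m + b * m]) - dl ((Mup j0 m xs)[j := a * m])
              - dl ((Mup j0 m xs)[j := b * m])"
        using A(1) True j0 len by (simp add: linext_diff linext_dl Mup_upd_eq distrib_right)
      then show ?thesis using tg_add[OF l A(3), of "a * m" "b * m"] A(4,5) m by (simp add: Rset_mult)
    next
      case False
      have "linext (Mup j0 m) g = dl ((Mup j0 m xs)[j := a + b]) - dl ((Mup j0 m xs)[j := a])
              - dl ((Mup j0 m xs)[j := b])"
        using A(1) False by (simp add: linext_diff linext_dl Mup_upd_neq)
      then show ?thesis using tg_add[OF l A(3) A(4,5)] by simp
    qed
  next
    case H
    have len: "length xs = length sl" using H(2) by (simp add: lists_R_length)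
    have l: "Mup j0 m xs \<in> lists_R r (length sl)" using Mup_lists[OF H(2) j0 m] .
    show ?thesis
    proof (cases "j = j0")
      case True
      have "linext (Mup j0 m) g = dl ((Mup j0 m xs)[j := Const q * Mup j0 m xs ! j]) - Poly_Mapping.single (Mup j0 m xs) q"
        using H(1) True j0 len by (simp add: linext_diff linext_dl linext_single Mup_upd_eq Mup_nth_eq mult.assoc)
      then show ?thesis using tg_hom[OF l H(3), of q] by simp
    next
      case False
      have "linext (Mup j0 m) g = dl ((Mup j0 m xs)[j := Const q * Mup j0 m xs ! j]) - Poly_Mapping.single (Mup j0 m xs) q"
        using H(1) False by (simp add: linext_diff linext_dl linext_single Mup_upd_neq Mup_nth_neq)
      then show ?thesis using tg_hom[OF l H(3), of q] by simp
    qed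
  next
    case B
    have len: "length xs = length sl" using B(2) by (simp add: lists_R_length)
    have l: "Mup j0 m xs \<in> lists_R r (length sl)" using Mup_lists[OF B(2) j0 m] .
    have "linext (Mup j0 m) g = dl ((Mup j0 m xs)[j := Mup j0 m xs ! j * fst (sl ! j) c])
            - dl ((Mup j0 m xs)[Suc j := c * Mup j0 m xs ! Suc j])"
    proof (cases "j0 = j")
      case True
      then show ?thesis using B(1) j0 len
        by (simp add: linext_diff linext_dl Mup_upd_eq Mup_upd_neq Mup_nth_eq Mup_nth_neq mult_ac)
    next
      case False
      show ?thesis
      proof (cases "j0 = Suc j")
        case True
        then show ?thesis using B(1) j0 len
          by (simp add: linext_diff linext_dl Mup_upd_eq Mup_upd_neq Mup_nth_eq Mup_nth_neq mult_ac)
      next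
        case False2: False
        then show ?thesis using B(1) False
          by (simp add: linext_diff linext_dl Mup_upd_neq Mup_nth_neq)
      qed
    qed
    then show ?thesis using tg_bal[OF l B(3,4)] by simp
  qed
next
  case zero then show ?case by (simp add: trel.zero)
next
  case (add u v) then show ?case by (simp add: linext_add trel.add)
next
  case (smul u q) then show ?case by (simp add: linext_scal trel.smul)
qed


lemma cls_eq: "v - w \<in> trel r sl \<Longrightarrow> cls r sl v = cls r sl w"
proof -
  assume vw: "v - w \<in> trel r sl"
  have "x - v \<in> trel r sl \<longleftrightarrow> x - w \<in> trel r sl" for x
  proof
    assume "x - v \<in> trel r sl"
    from trel.add[OF this vw] show "x - w \<in> trel r sl" by simp
  next
    assume "x - w \<in> trel r sl"
    from trel_diff[OF this vw] show "x - v \<in> trel r sl" by simp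
  qed
  then show ?thesis by (auto simp: cls_def)
qed

lemma cls_self: "v \<in> Vfree r (length sl) \<Longrightarrow> v \<in> cls r sl v"
  by (simp add: cls_def trel.zero)

lemma cls_memD: "a \<in> cls r sl v \<Longrightarrow> a \<in> Vfree r (length sl) \<and> a - v \<in> trel r sl"
  by (simp add: cls_def)

lemma keys_linext: "Poly_Mapping.keys (linext g u) \<subseteq> g ` Poly_Mapping.keys u"
proof -
  have "Poly_Mapping.keys (linext g u) \<subseteq> (\<Union>xs\<in>Poly_Mapping.keys u.
          Poly_Mapping.keys (Poly_Mapping.single (g xs) (Poly_Mapping.lookup u xs)))"
    unfolding linext_def by (rule keys_sum)
  also have "\<dots> \<subseteq> g ` Poly_Mapping.keys u" by auto
  finally show ?thesis .
qed

lemma Vfree_Mup: "u \<in> Vfree r (length sl) \<Longrightarrow> j0 < length sl \<Longrightarrow> m \<in> Rset r \<Longrightarrow>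
  linext (Mup j0 m) u \<in> Vfree r (length sl)"
  using keys_linext[of "Mup j0 m" u] Mup_lists[of _ r "length sl" j0 m]
  by (fastforce simp: Vfree_def)

lemma union_cls:
  assumes u: "u \<in> Vfree r (length sl)" and m: "m \<in> Rset r" and j0: "j0 < length sl"
  shows "(\<Union>a\<in>cls r sl u. cls r sl (linext (Mup j0 m) a)) = cls r sl (linext (Mup j0 m) u)"
proof -
  have "cls r sl (linext (Mup j0 m) a) = cls r sl (linext (Mup j0 m) u)" if a: "a \<in> cls r sl u" for a
  proof (rule cls_eq)
    have "linext (Mup j0 m) (a - u) \<in> trel r sl"
      using trel_Mup[OF _ m j0] cls_memD[OF a] by blast
    then show "linext (Mup j0 m) a - linext (Mup j0 m) u \<in> trel r sl" by (simp add: linext_diff)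
  qed
  moreover have "u \<in> cls r sl u" using cls_self[OF u] .
  ultimately show ?thesis by blast
qed

lemma tlact_Mup: "tlact r sl c A = (\<Union>a\<in>A. cls r sl (linext (Mup 0 c) a))"
proof -
  have "(\<lambda>xs. xs[0 := c * xs ! 0]) = Mup 0 c" by (rule ext) (simp add: Mup_def mult.commute)
  then show ?thesis by (simp add: tlact_def)
qed

lemma tract_Mup: "tract r sl c A = (\<Union>a\<in>A. cls r sl (linext (Mup (length sl - 1) (fst (last sl) c)) a))"
proof -
  have "(\<lambda>xs. xs[length sl - 1 := xs ! (length sl - 1) * fst (last sl) c]) = Mup (length sl - 1) (fst (last sl) c)"
    by (rule ext) (simp add: Mup_def)
  then show ?thesis by (simp add: tract_def)
qed

lemma fv_diff_linext:
  "linext g u - linext h u = (\<Sum>xs\<in>Poly_Mapping.keys u. scal (Poly_Mapping.lookup u xs) (dl (g xs) - dl (h xs)))"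
  by (simp add: linext_def sum_subtractf scal_diff scal_single dl_def)

context
  fixes r :: nat
  assumes r3: "3 \<le> r"
begin

lemma hsum_eq: "hsum T = sum_list (map tH T)" by (rule hsum_def[OF r3])

lemma push:
  "\<forall>t\<in>set T. goodt r t \<Longrightarrow> T \<noteq> [] \<Longrightarrow> xs \<in> lists_R r (length T) \<Longrightarrow>
   dl (Mup (length T - 1) (tphi (last T) (Pc r c)) xs) - dl (Mup 0 (Pc r (c - hsum T)) xs) \<in> trel r (strip T)"
proof (induction T arbitrary: xs)
  case Nil then show ?case by simp
next
  case (Cons t T)
  from Cons.prems(3) obtain x xs' where xs: "xs = x # xs'" "x \<in> Rset r" "xs' \<in> lists_R r (length T)"
    by (auto elim: lists_R_SucE)
  have gt: "goodt r t" and gT: "\<forall>t\<in>set T. goodt r t" using Cons.prems by auto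
  show ?case
  proof (cases "T = []")
    case True
    then show ?thesis using xs goodt_Pc[OF r3 gt] by (simp add: Mup_def hsum_eq trel.zero mult.commute)
  next
    case False
    then obtain n where n: "length T = Suc n" by (cases T) auto
    let ?P1 = "Pc r (c - hsum T)"
    have IH: "dl (Mup (length T - 1) (tphi (last T) (Pc r c)) xs') - dl (Mup 0 ?P1 xs') \<in> trel r (strip T)"
      using Cons.IH[OF gT False xs(3)] .
    have L: "dl (x # Mup (length T - 1) (tphi (last T) (Pc r c)) xs') - dl (x # Mup 0 ?P1 xs')
             \<in> trel r (strip (t # T))"
      using trel_cons[OF IH xs(2), of "(tphi t, tS t)"] by (simp add: linext_diff linext_dl)
    have l: "x # xs' \<in> lists_R r (length (strip (t # T)))" using xs by (simp add: lists_R_Cons)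
    have B: "dl ((x # xs')[0 := (x # xs') ! 0 * tphi t ?P1]) - dl ((x # xs')[Suc 0 := ?P1 * (x # xs') ! Suc 0])
             \<in> trel r (strip (t # T))"
      using tg_bal[OF l, of 0 ?P1] n Pc_in_S[OF r3 gt] by simp
    have ph: "tphi t ?P1 = Pc r (c - hsum (t # T))"
      using goodt_Pc[OF r3 gt] by (simp add: hsum_eq algebra_simps)
    have e1: "Mup (length (t # T) - 1) (tphi (last (t # T)) (Pc r c)) (x # xs')
            = x # Mup (length T - 1) (tphi (last T) (Pc r c)) xs'"
      using n False by (simp add: Mup_def)
    have e2: "Mup 0 ?P1 xs' = xs'[0 := ?P1 * xs' ! 0]" by (simp add: Mup_def mult.commute)
    have "dl (Mup (length (t # T) - 1) (tphi (last (t # T)) (Pc r c)) xs) - dl (Mup 0 (Pc r (c - hsum (t # T))) xs)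
        = (dl (x # Mup (length T - 1) (tphi (last T) (Pc r c)) xs') - dl (x # Mup 0 ?P1 xs'))
          - (dl ((x # xs')[0 := (x # xs') ! 0 * tphi t ?P1]) - dl ((x # xs')[Suc 0 := ?P1 * (x # xs') ! Suc 0]))"
      (is "?L = ?R")
      using n xs(1) e1 e2 ph by (simp add: Mup_def)
    moreover have "?R \<in> trel r (strip (t # T))" by (rule trel_diff[OF L B])
    ultimately show ?thesis by simp
  qed
qed

lemma push_fv:
  assumes g: "\<forall>t\<in>set T. goodt r t" and T: "T \<noteq> []" and u: "u \<in> Vfree r (length T)"
  shows "linext (Mup (length T - 1) (tphi (last T) (Pc r c))) u - linext (Mup 0 (Pc r (c - hsum T))) u \<in> trel r (strip T)"
  unfolding fv_diff_linext
proof (rule trel_sum)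
  fix xs assume "xs \<in> Poly_Mapping.keys u"
  then have "xs \<in> lists_R r (length T)" using u by (auto simp: Vfree_def)
  then show "scal (Poly_Mapping.lookup u xs) (dl (Mup (length T - 1) (tphi (last T) (Pc r c)) xs) -
      dl (Mup 0 (Pc r (c - hsum T)) xs)) \<in> trel r (strip T)"
    by (rule trel.smul[OF push[OF g T]])
qed

lemma Phi_Mup0:
  assumes T: "T \<noteq> []" and u: "u \<in> Vfree r (length T)"
  shows "Phi r T (linext (Mup 0 m) u) w = m * Phi r T u w"
proof -
  have "NF r T (Mup 0 m xs) w = m * NF r T xs w" if "xs \<in> Poly_Mapping.keys u" for xs
  proof -
    have "xs \<noteq> []" using that u T by (cases xs) (auto simp: Vfree_def lists_R_def)
    then show ?thesis using NF_update0[OF r3 T, of xs m w] by (simp add: Mup_def mult.commute)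
  qed
  note h = this
  have "Phi r T (linext (Mup 0 m) u) w = (\<Sum>xs\<in>Poly_Mapping.keys u. Const (Poly_Mapping.lookup u xs) * NF r T (Mup 0 m xs) w)"
    by (rule Phi_linext)
  also have "\<dots> = (\<Sum>xs\<in>Poly_Mapping.keys u. m * (Const (Poly_Mapping.lookup u xs) * NF r T xs w))"
    by (rule sum.cong) (simp_all add: h mult_ac)
  also have "\<dots> = m * Phi r T u w" by (simp add: Phi_def sum_distrib_left)
  finally show ?thesis .
qed

lemma Phi_Mup_last:
  assumes g: "\<forall>t\<in>set T. goodt r t" and T: "T \<noteq> []" and u: "u \<in> Vfree r (length T)"
  shows "Phi r T (linext (Mup (length T - 1) (tphi (last T) (Pc r c))) u) w = Pc r (c - hsum T) * Phi r T u w"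
proof -
  have "NF r T (Mup (length T - 1) (tphi (last T) (Pc r c)) xs) w = Pc r (c - hsum T) * NF r T xs w"
    if "xs \<in> Poly_Mapping.keys u" for xs
  proof -
    have "xs \<in> lists_R r (length T)" using that u by (auto simp: Vfree_def)
    then show ?thesis using NF_right[OF r3 g T, of xs c w] by (simp add: Mup_def)
  qed
  note h = this
  have "Phi r T (linext (Mup (length T - 1) (tphi (last T) (Pc r c))) u) w
      = (\<Sum>xs\<in>Poly_Mapping.keys u. Const (Poly_Mapping.lookup u xs) * NF r T (Mup (length T - 1) (tphi (last T) (Pc r c)) xs) w)"
    by (rule Phi_linext)
  also have "\<dots> = (\<Sum>xs\<in>Poly_Mapping.keys u. Pc r (c - hsum T) * (Const (Poly_Mapping.lookup u xs) * NF r T xs w))"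
    by (rule sum.cong[OF refl], subst h, assumption, simp add: mult_ac)
  also have "\<dots> = Pc r (c - hsum T) * Phi r T u w" by (simp add: Phi_def sum_distrib_left)
  finally show ?thesis .
qed

end


definition bpt :: "nat \<Rightarrow> int \<Rightarrow> trip list" where
  "bpt r k = (if k = 0 then [(id, Rset r, None, 0)]
     else if k > 0 then replicate (nat k) (rho r, Rset r, None, 1)
     else replicate (nat (- k)) (rho_inv r, Rset r, None, -1))"

definition bst :: "nat \<Rightarrow> nat \<Rightarrow> trip list" where
  "bst r i = [(id, Inv r i, Some i, 0), (id, Rset r, None, 0)]"

definition btrips :: "nat \<Rightarrow> int \<Rightarrow> nat list \<Rightarrow> trip list" where
  "btrips r k is' = bpt r k @ concat (map (bst r) is')"

lemma strip_append: "strip (A @ B) = strip A @ strip B" by (simp add: strip_def)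

lemma slots_append: "slots r (A @ B) = slots r A @ slots r B" by (simp add: slots_def)

lemma slots_rep: "slots r (replicate n (Tw \<tau>)) = replicate n (\<tau>, Rset r)"
  by (induction n) (simp_all add: slots_def)

lemma strip_rep: "strip (replicate n t) = replicate n (tphi t, tS t)"
  by (simp add: strip_def)

lemma strip_bst: "strip (concat (map (bst r) is')) = slots r (map Bs is')"
  by (induction is') (simp_all add: slots_def bst_def strip_def tphi_def tS_def)

lemma strip_bpt: "strip (bpt r k) = slots r (bpow r k)"
  by (simp add: bpt_def bpow_def strip_rep slots_rep tphi_def tS_def) (simp add: slots_def strip_def)

lemma strip_btrips: "strip (btrips r k is') = slots r (bfactors r k is')"
  by (simp add: btrips_def bfactors_def strip_append slots_append strip_bpt strip_bst)

lemma btrips_ne: "btrips r k is' \<noteq> []"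
  by (simp add: btrips_def bpt_def)

lemma hsum_list_bst: "sum_list (map tH (concat (map (bst r) is'))) = 0"
  by (induction is') (simp_all add: bst_def tH_def)

lemma hsum_list_btrips: "sum_list (map tH (btrips r k is')) = of_int k"
proof -
  have "sum_list (map tH (bpt r k)) = of_int k"
  proof (cases "k = 0")
    case True then show ?thesis by (simp add: bpt_def tH_def)
  next
    case False
    show ?thesis
    proof (cases "k > 0")
      case True then show ?thesis by (simp add: bpt_def tH_def sum_list_replicate)
    next
      case False2: False
      then show ?thesis using False by (simp add: bpt_def tH_def sum_list_replicate)
    qed
  qed
  then show ?thesis by (simp add: btrips_def hsum_list_bst)
qed

context
  fixes r :: nat
  assumes r3: "3 \<le> r"
begin

lemma good_btrips:
  assumes "set is' \<subseteq> {1..r}"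
  shows "\<forall>t\<in>set (btrips r k is'). goodt r t"
proof -
  have g_id: "goodt r (id, Rset r, None, 0)"
    by (simp add: goodt_def tphi_def tS_def tO_def tH_def rh_id)
  have g_rho: "goodt r (rho r, Rset r, None, 1)"
    by (simp add: goodt_def tphi_def tS_def tO_def tH_def rh_rho[OF r3] rho_Pc[OF r3])
  have g_rhoi: "goodt r (rho_inv r, Rset r, None, -1)"
    by (simp add: goodt_def tphi_def tS_def tO_def tH_def rh_rho_inv[OF r3] rho_inv_Pc[OF r3])
  have g_inv: "goodt r (id, Inv r i, Some i, 0)" if "i \<in> set is'" for i
    using that assms by (auto simp: goodt_def tphi_def tS_def tO_def tH_def rh_id)
  have "\<forall>t\<in>set (bpt r k). goodt r t" using g_id g_rho g_rhoi by (simp add: bpt_def)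
  moreover have "\<forall>t\<in>set (concat (map (bst r) is')). goodt r t" using g_inv g_id by (auto simp: bst_def)
  ultimately show ?thesis by (auto simp: btrips_def)
qed

lemma goodt_Rset_phi: "goodt r t \<Longrightarrow> tphi t (Pc r c) \<in> Rset r"
  by (rule rh_Rset[OF goodt_rh[OF r3]], assumption, rule Pc_Rset)

end

theorem mainTheorem3:
  fixes r :: nat and k l d :: int and is' js :: "nat list" and f :: "fv set \<Rightarrow> fv set"
  assumes "3 \<le> r" and "k \<noteq> l"
    and "set is' \<subseteq> {1..r}" and "set js \<subseteq> {1..r}"
    and "bihom r (slots r (bfactors r k is')) (slots r (bfactors r l js)) d f"
  shows "\<forall>A\<in>tcarrier r (slots r (bfactors r k is')). f A = tzero r (slots r (bfactors r l js))"
proof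
  fix A assume A0: "A \<in> tcarrier r (slots r (bfactors r k is'))"
  have r3: "3 \<le> r" using assms(1) .
  define T where "T = btrips r k is'"
  define T' where "T' = btrips r l js"
  have X: "slots r (bfactors r k is') = strip T" by (simp add: T_def strip_btrips)
  have Y: "slots r (bfactors r l js) = strip T'" by (simp add: T'_def strip_btrips)
  have gT: "\<forall>t\<in>set T. goodt r t" unfolding T_def by (rule good_btrips[OF r3 assms(3)])
  have gT': "\<forall>t\<in>set T'. goodt r t" unfolding T'_def by (rule good_btrips[OF r3 assms(4)])
  have TN: "T \<noteq> []" by (simp add: T_def btrips_ne)
  have TN': "T' \<noteq> []" by (simp add: T'_def btrips_ne)
  have hT: "hsum T = of_int k" using hsum_list_btrips hsum_eq[OF r3] by (simp add: T_def)
  have hT': "hsum T' = of_int l" using hsum_list_btrips hsum_eq[OF r3] by (simp add: T'_def)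
  have f: "bihom r (strip T) (strip T') d f" using assms(5) X Y by simp
  have A: "A \<in> tcarrier r (strip T)" using A0 X by simp
  from A obtain u where u: "u \<in> Vfree r (length T)" "A = cls r (strip T) u"
    unfolding tcarrier_def by auto
  let ?s = "Pc r 0"
  let ?Pk = "Pc r (- of_int k)"
  have sR: "?s \<in> Rset r" and PkR: "?Pk \<in> Rset r" by (simp_all add: Pc_Rset)
  have lastT: "fst (last (strip T)) = tphi (last T)" using TN by (simp add: strip_def last_map)
  have lastT': "fst (last (strip T')) = tphi (last T')" using TN' by (simp add: strip_def last_map)
  have gl: "goodt r (last T)" using gT TN by simp
  have gl': "goodt r (last T')" using gT' TN' by simp
  have lT: "length T - 1 < length T" using TN by (cases T) auto
  have lT': "length T' - 1 < length T'" using TN' by (cases T') auto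
  have 1: "tract r (strip T) ?s A = cls r (strip T) (linext (Mup (length T - 1) (tphi (last T) ?s)) u)"
    unfolding tract_Mup lastT u(2) length_strip
    by (rule union_cls) (use u lT goodt_Rset_phi[OF r3 gl] in auto)
  have 2: "tlact r (strip T) ?Pk A = cls r (strip T) (linext (Mup 0 ?Pk) u)"
    unfolding tlact_Mup u(2)
    by (rule union_cls) (use u TN PkR in \<open>auto\<close>)
  have 3: "tract r (strip T) ?s A = tlact r (strip T) ?Pk A"
    unfolding 1 2
  proof (rule cls_eq)
    show "linext (Mup (length T - 1) (tphi (last T) ?s)) u - linext (Mup 0 ?Pk) u \<in> trel r (strip T)"
      using push_fv[OF r3 gT TN u(1), of 0] hT by simp
  qed
  have f1: "f (tract r (strip T) ?s A) = tract r (strip T') ?s (f A)"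
    using f sR A by (simp add: bihom_def)
  have f2: "f (tlact r (strip T) ?Pk A) = tlact r (strip T') ?Pk (f A)"
    using f PkR A by (simp add: bihom_def)
  have eqY: "tract r (strip T') ?s (f A) = tlact r (strip T') ?Pk (f A)"
    using f1 f2 3 by simp
  have fA: "f A \<in> tcarrier r (strip T')" using f A by (simp add: bihom_def)
  then obtain v where v: "v \<in> Vfree r (length T')" "f A = cls r (strip T') v"
    unfolding tcarrier_def by auto
  let ?Rv = "linext (Mup (length T' - 1) (tphi (last T') ?s)) v"
  have RvV: "?Rv \<in> Vfree r (length (strip T'))"
    using Vfree_Mup[of v r "strip T'"] v(1) lT' goodt_Rset_phi[OF r3 gl'] by simp
  have "?Rv \<in> tract r (strip T') ?s (f A)"
    unfolding tract_Mup lastT' length_strip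
  proof
    show "v \<in> f A" using v cls_self[of v r "strip T'"] by simp
    show "?Rv \<in> cls r (strip T') (linext (Mup (length T' - 1) (tphi (last T') ?s)) v)"
      using cls_self[OF RvV] .
  qed
  then have "?Rv \<in> tlact r (strip T') ?Pk (f A)" using eqY by simp
  then obtain a where a: "a \<in> f A" "?Rv \<in> cls r (strip T') (linext (Mup 0 ?Pk) a)"
    unfolding tlact_Mup by blast
  have Ra: "?Rv - linext (Mup 0 ?Pk) a \<in> trel r (strip T')" using cls_memD[OF a(2)] by simp
  have aC: "a \<in> cls r (strip T') v" using a(1) v(2) by simp
  have av: "a \<in> Vfree r (length T')" "a - v \<in> trel r (strip T')" using cls_memD[OF aC] by simp_all
  have Phi0: "Phi r T' v w = 0" for w
  proof -
    have e1: "Phi r T' ?Rv w = Phi r T' (linext (Mup 0 ?Pk) a) w"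
      using Phi_trel[OF r3 gT' Ra, of w] by (simp add: Phi_diff)
    have e2: "Phi r T' ?Rv w = Pc r (- of_int l) * Phi r T' v w"
      using Phi_Mup_last[OF r3 gT' TN' v(1), of 0 w] hT' by simp
    have e3: "Phi r T' a w = Phi r T' v w"
      using Phi_trel[OF r3 gT' av(2), of w] by (simp add: Phi_diff)
    have e4: "Phi r T' (linext (Mup 0 ?Pk) a) w = ?Pk * Phi r T' v w"
      using Phi_Mup0[OF r3 TN' av(1), of ?Pk w] e3 by simp
    have ee: "Pc r (- of_int l) * Phi r T' v w = ?Pk * Phi r T' v w"
      unfolding e2[symmetric] e4[symmetric] by (rule e1)
    have "(Pc r (- of_int l) - ?Pk) * Phi r T' v w = 0"
      unfolding left_diff_distrib ee by simp
    moreover have "Pc r (- of_int l) - ?Pk = Const (of_int k - of_int l) * Var 0"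
    proof -
      have "Pc r (- of_int l) - ?Pk = (Const (- of_int l) - Const (- of_int k)) * Var 0"
        by (simp add: Pc_def left_diff_distrib)
      also have "Const (- of_int l) - Const (- of_int k) = Const (of_int k - of_int l)"
        unfolding Const_diff[symmetric] by simp
      finally show ?thesis .
    qed
    moreover have "Const (of_int k - of_int l) \<noteq> 0"
      using assms(2) Const_inj[of "of_int k - of_int l" 0] by simp
    ultimately show ?thesis using Var_ne_zero[of 0] by simp
  qed
  have "v \<in> trel r (strip T')" by (rule Phi_zero_trel[OF r3 gT' TN' v(1) Phi0])
  then have "cls r (strip T') v = cls r (strip T') 0" by (intro cls_eq) simp
  then show "f A = tzero r (slots r (bfactors r l js))" using v(2) Y by (simp add: tzero_def)
qed

end
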